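(* Consider the control system $$\dot x=f(x)+g(x,\theta)\,y+\Phi(x)\,\theta+G(x)\,d,\qquad \dot y=h(x,y)+\tilde g(x,y,\theta)\,u+\varphi'(x,y)\,\theta+\alpha'(x,y)\,d,$$ with state $(x,y)\in\mathbb{R}^n\times\mathbb{R}$, control $u\in\mathbb{R}$, disturbances $d\in\mathbb{R}^l$, $\theta\in\Theta\subseteq\mathbb{R}^p$, where $f:\mathbb{R}^n\to\mathbb{R}^n$, $g:\mathbb{R}^n\times\Theta\to\mathbb{R}^n$, $\Phi:\mathbb{R}^n\to\mathbb{R}^{n\times p}$, $G:\mathbb{R}^n\to\mathbb{R}^{n\times l}$, $h:\mathbb{R}^n\times\mathbb{R}\to\mathbb{R}$, $\varphi:\mathbb{R}^n\times\mathbb{R}\to\mathbb{R}^p$, $\alpha:\mathbb{R}^n\times\mathbb{R}\to\mathbb{R}^l$, $\tilde g:\mathbb{R}^n\times\mathbb{R}\times\Theta\to\mathbb{R}$ are smooth with $f(0)=0$, $\Phi(0)=0$, $h(0,0)=0$, $\varphi(0,0)=0$. Assume there exist constants $a,b,c,\Gamma,\varepsilon>0$, smooth $\kappa,\lambda\in K_\infty$, smooth functions $\sigma,k,V:\mathbb{R}^n\times\mathbb{R}\to\mathbb{R}$, a smooth $\eta:\mathbb{R}^n\times\mathbb{R}\to(0,+\infty)$ and a smooth $\mu:\mathbb{R}^n\to\mathbb{R}$, with $V(0,z)=k(0,z)=0$ for all $z\in\mathbb{R}$ and $V(x,z)>0$ for $x\ne0$, such that for all $\theta\in\Theta$, $d\in\mathbb{R}^l$,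 $(x,y,z)\in\mathbb{R}^n\times\mathbb{R}\times\mathbb{R}$: (a) $|x|^2\le\sigma(x,z)V(x,z)$; (b) $\frac{\partial V}{\partial x}(x,z)\big(f(x)+g(x,\theta)k(x,z)+\Phi(x)\theta+G(x)d\big)+\frac{\partial V}{\partial z}(x,z)\Gamma e^{-z}(V(x,z)-\varepsilon)^+\le -cV(x,z)+a\,\dfrac{|d|^2+\big((|\theta|-b-\lambda(e^z))^+\big)^2}{1+\kappa(e^z)}$; (c) $\tilde g(x,y,\theta)\ge\eta(x,y)$; (d) $|g(x,\theta)|\le\mu(x)(1+|\theta|)$. Define $\bar V(x,y,z)=V(x,z)+\frac12\big(y-k(x,z)\big)^2$. Then there exist $\bar\sigma,\bar k\in C^\infty(\mathbb{R}^n\times\mathbb{R}\times\mathbb{R})$ with $\bar k(0,0,z)=0$ for all $z$, such that for all $d\in\mathbb{R}^l$, $\theta\in\Theta$, $(x,y,z)\in\mathbb{R}^n\times\mathbb{R}\times\mathbb{R}$: $$|x|^2+|y|^2\le\bar\sigma(x,y,z)\bar V(x,y,z),$$ and $$\frac{\partial\bar V}{\partial x}\big(f(x)+g(x,\theta)y+\Phi(x)\theta+G(x)d\big)+\frac{\partial\bar V}{\partial z}\Gamma e^{-z}\big(\bar V(x,y,z)-\varepsilon\big)^+ +\frac{\partial\bar V}{\partial y}\big(h(x,y)+\tilde g(x,y,\theta)\bar k(x,y,z)+\varphi'(x,y)\theta+\alpha'(x,y)d\big)$$ $$\le -\frac c2\bar V(x,y,z)+2a\,\frac{|d|^2+\big((|\theta|-b-\lambda(e^z))^+\big)^2}{1+\kappa(e^z)},$$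 where all partial derivatives of $\bar V$ are evaluated at $(x,y,z)$.
   Context: $|\cdot|$ is the Euclidean norm, $v'$ denotes transpose and $s^+=\max(s,0)$. $K_\infty$ is the class of continuous increasing functions $[0,\infty)\to[0,\infty)$ vanishing at $0$ and tending to $+\infty$. *)

theory Defs
  imports "HOL-Analysis.Analysis"
begin

fun dirderivs :: "'a::real_normed_vector list \<Rightarrow> ('a \<Rightarrow> 'b::real_normed_vector) \<Rightarrow> 'a \<Rightarrow> 'b" where
  "dirderivs [] f = f"
| "dirderivs (v # vs) f = (\<lambda>x. frechet_derivative (dirderivs vs f) (at x) v)"

definition smooth_on :: "'a::real_normed_vector set \<Rightarrow> ('a \<Rightarrow> 'b::real_normed_vector) \<Rightarrow> bool" where
  "smooth_on S f \<longleftrightarrow> (\<forall>vs. \<forall>x\<in>S. dirderivs vs f differentiable (at x))"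

abbreviation smooth :: "('a::real_normed_vector \<Rightarrow> 'b::real_normed_vector) \<Rightarrow> bool" where
  "smooth f \<equiv> smooth_on UNIV f"

definition K_inf :: "(real \<Rightarrow> real) \<Rightarrow> bool" where
  "K_inf \<kappa> \<longleftrightarrow> continuous_on {0..} \<kappa> \<and> strict_mono_on {0..} \<kappa> \<and> \<kappa> 0 = 0
     \<and> filterlim \<kappa> at_top at_top \<and> (\<forall>s\<ge>0. \<kappa> s \<ge> 0)"

definition pos_part :: "real \<Rightarrow> real" where
  "pos_part s = max s 0"

end

theory Submission
  imports Defs
begin

lemma smooth_coind:
  assumes P0: "P f"
    and step: "\<And>g. P g \<Longrightarrow> (\<forall>x. g differentiable at x) \<and>
        (\<forall>v. \<exists>g'. P g' \<and> (\<forall>x. frechet_derivative g (at x) v = g' x))"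
  shows "smooth f"
proof -
  have "\<exists>g. P g \<and> dirderivs vs f = g" for vs
  proof (induction vs)
    case Nil then show ?case using P0 by auto
  next
    case (Cons v vs)
    then obtain g where g: "P g" "dirderivs vs f = g" by blast
    from step[OF g(1)] obtain g' where "P g'" "\<forall>x. frechet_derivative g (at x) v = g' x" by blast
    then show ?case using g by (auto intro!: exI[of _ g'])
  qed
  then show ?thesis unfolding smooth_on_def using step by blast
qed

lemma dirderivs_snoc: "dirderivs vs (\<lambda>x. frechet_derivative f (at x) v) = dirderivs (vs @ [v]) f"
  by (induction vs) auto

lemma smooth_D: "smooth f \<Longrightarrow> smooth (\<lambda>x. frechet_derivative f (at x) v)"
  unfolding smooth_on_def by (simp add: dirderivs_snoc)

lemma smooth_diff: "smooth f \<Longrightarrow> f differentiable at x"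
  unfolding smooth_on_def by (metis UNIV_I dirderivs.simps(1))

lemma smooth_hasd: "smooth f \<Longrightarrow> (f has_derivative frechet_derivative f (at x)) (at x)"
  using smooth_diff frechet_derivative_works by blast

lemma smooth_cont: "smooth f \<Longrightarrow> continuous (at x) f"
  using smooth_diff differentiable_imp_continuous_within by blast

lemma smooth_cont_on: "smooth f \<Longrightarrow> continuous_on S f"
  by (simp add: continuous_at_imp_continuous_on smooth_cont)

lemma smooth_const: "smooth (\<lambda>x. c)"
proof (rule smooth_coind[where P="\<lambda>g. \<exists>c. g = (\<lambda>x. c)"])
  fix g :: "'a \<Rightarrow> 'b" assume "\<exists>c. g = (\<lambda>x. c)"
  then obtain c where g: "g = (\<lambda>x. c)" by blast
  show "(\<forall>x. g differentiable at x) \<and> (\<forall>v. \<exists>g'. (\<exists>c. g' = (\<lambda>x. c)) \<and> (\<forall>x. frechet_derivative g (at x) v = g' x))"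
    unfolding g by (auto simp: frechet_derivative_const)
qed auto

lemma smooth_linear: assumes "bounded_linear L" shows "smooth L"
proof (rule smooth_coind[where P="\<lambda>g. (\<exists>c. g = (\<lambda>x. c)) \<or> bounded_linear g"])
  fix g :: "'a \<Rightarrow> 'b" assume "(\<exists>c. g = (\<lambda>x. c)) \<or> bounded_linear g"
  then show "(\<forall>x. g differentiable at x) \<and> (\<forall>v. \<exists>g'. ((\<exists>c. g' = (\<lambda>x. c)) \<or> bounded_linear g') \<and> (\<forall>x. frechet_derivative g (at x) v = g' x))"
  proof
    assume "\<exists>c. g = (\<lambda>x. c)" then show ?thesis
      by (auto simp: frechet_derivative_const)
  next
    assume bl: "bounded_linear g"
    have "frechet_derivative g (at x) = g" for x
      using frechet_derivative_at[OF bounded_linear_imp_has_derivative[OF bl]] by simp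
    then show ?thesis using bl
      by (auto simp: bounded_linear_imp_differentiable)
  qed
qed (use assms in auto)

definition SP :: "(('a \<Rightarrow> real) \<times> ('a \<Rightarrow> real)) list \<Rightarrow> 'a \<Rightarrow> real" where
  "SP ps x = sum_list (map (\<lambda>p. fst p x * snd p x) ps)"

definition DP :: "'a::real_normed_vector \<Rightarrow> (('a \<Rightarrow> real) \<times> ('a \<Rightarrow> real)) list \<Rightarrow> (('a \<Rightarrow> real) \<times> ('a \<Rightarrow> real)) list" where
  "DP v ps = concat (map (\<lambda>p. [(\<lambda>x. frechet_derivative (fst p) (at x) v, snd p), (fst p, \<lambda>x. frechet_derivative (snd p) (at x) v)]) ps)"

lemma SP_deriv:
  assumes "\<forall>p\<in>set ps. smooth (fst p) \<and> smooth (snd p)"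
  shows "(SP ps has_derivative (\<lambda>v. SP (DP v ps) x)) (at x)"
  using assms
proof (induction ps)
  case Nil then show ?case by (simp add: SP_def DP_def)
next
  case (Cons p ps)
  have 1: "((\<lambda>x. fst p x * snd p x) has_derivative (\<lambda>v. fst p x * frechet_derivative (snd p) (at x) v + frechet_derivative (fst p) (at x) v * snd p x)) (at x)"
    using Cons.prems by (intro has_derivative_mult smooth_hasd) auto
  have "((\<lambda>x. fst p x * snd p x + SP ps x) has_derivative (\<lambda>v. (fst p x * frechet_derivative (snd p) (at x) v + frechet_derivative (fst p) (at x) v * snd p x) + SP (DP v ps) x)) (at x)"
    using Cons by (intro has_derivative_add 1) auto
  then show ?case by (simp add: SP_def DP_def algebra_simps)
qed

lemma DP_valid: "\<forall>p\<in>set ps. smooth (fst p) \<and> smooth (snd p) \<Longrightarrow> \<forall>p\<in>set (DP v ps). smooth (fst p) \<and> smooth (snd p)"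
  by (auto simp: DP_def smooth_D)

lemma SP_smooth: assumes "\<forall>p\<in>set ps. smooth (fst p) \<and> smooth (snd p)" shows "smooth (SP ps)"
proof (rule smooth_coind[where P="\<lambda>h. \<exists>ps. (\<forall>p\<in>set ps. smooth (fst p) \<and> smooth (snd p)) \<and> h = SP ps"])
  fix g :: "'a \<Rightarrow> real"
  assume "\<exists>ps. (\<forall>p\<in>set ps. smooth (fst p) \<and> smooth (snd p)) \<and> g = SP ps"
  then obtain ps where ps: "\<forall>p\<in>set ps. smooth (fst p) \<and> smooth (snd p)" "g = SP ps" by blast
  show "(\<forall>x. g differentiable at x) \<and> (\<forall>v. \<exists>g'. (\<exists>ps. (\<forall>p\<in>set ps. smooth (fst p) \<and> smooth (snd p)) \<and> g' = SP ps) \<and> (\<forall>x. frechet_derivative g (at x) v = g' x))"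
  proof (intro conjI allI)
    fix x show "g differentiable at x" using SP_deriv[OF ps(1)] ps(2) differentiable_def by blast
  next
    fix v show "\<exists>g'. (\<exists>ps. (\<forall>p\<in>set ps. smooth (fst p) \<and> smooth (snd p)) \<and> g' = SP ps) \<and> (\<forall>x. frechet_derivative g (at x) v = g' x)"
      using DP_valid[OF ps(1)] frechet_derivative_at[OF SP_deriv[OF ps(1)]] ps(2)
      by (intro exI[of _ "SP (DP v ps)"]) metis
  qed
qed (use assms in auto)

lemma smooth_mult: "smooth f \<Longrightarrow> smooth g \<Longrightarrow> smooth (\<lambda>x. f x * g x :: real)"
  using SP_smooth[of "[(f,g)]"] by (simp add: SP_def[abs_def])

lemma smooth_add: "smooth f \<Longrightarrow> smooth g \<Longrightarrow> smooth (\<lambda>x. f x + g x :: real)"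
  using SP_smooth[of "[(f,\<lambda>x. 1),(g,\<lambda>x. 1)]"] by (simp add: SP_def[abs_def] smooth_const)

lemma smooth_minus: "smooth f \<Longrightarrow> smooth (\<lambda>x. - f x :: real)"
  using SP_smooth[of "[(f,\<lambda>x. -1)]"] by (simp add: SP_def[abs_def] smooth_const)

lemma smooth_diff': "smooth f \<Longrightarrow> smooth g \<Longrightarrow> smooth (\<lambda>x. f x - g x :: real)"
  using smooth_add[OF _ smooth_minus] by simp

lemma smooth_comp_linear:
  assumes f: "smooth f" and L: "bounded_linear L"
  shows "smooth (\<lambda>x. f (L x))"
proof (rule smooth_coind[where P="\<lambda>h. \<exists>f. smooth f \<and> h = (\<lambda>x. f (L x))"])
  fix g assume "\<exists>f. smooth f \<and> g = (\<lambda>x. f (L x))"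
  then obtain f where f: "smooth f" and g: "g = (\<lambda>x. f (L x))" by blast
  have d: "(g has_derivative (\<lambda>v. frechet_derivative f (at (L x)) (L v))) (at x)" for x
    unfolding g using has_derivative_compose[OF bounded_linear_imp_has_derivative[OF L] smooth_hasd[OF f]]
    by (simp add: o_def)
  show "(\<forall>x. g differentiable at x) \<and> (\<forall>v. \<exists>g'. (\<exists>f. smooth f \<and> g' = (\<lambda>x. f (L x))) \<and> (\<forall>x. frechet_derivative g (at x) v = g' x))"
  proof (intro conjI allI)
    fix x show "g differentiable at x" using d differentiable_def by blast
  next
    fix v show "\<exists>g'. (\<exists>f. smooth f \<and> g' = (\<lambda>x. f (L x))) \<and> (\<forall>x. frechet_derivative g (at x) v = g' x)"
      apply (rule exI[of _ "\<lambda>x. frechet_derivative f (at (L x)) (L v)"])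
      using smooth_D[OF f, of "L v"] frechet_derivative_at[OF d]
      by (auto intro!: exI[of _ "\<lambda>y. frechet_derivative f (at y) (L v)"] simp: fun_eq_iff)
  qed
qed (use f in auto)

definition SR :: "('a \<Rightarrow> real) \<Rightarrow> (nat \<times> ('a \<Rightarrow> real)) list \<Rightarrow> 'a \<Rightarrow> real" where
  "SR \<eta> ps x = sum_list (map (\<lambda>p. inverse (\<eta> x) ^ fst p * snd p x) ps)"

definition DR :: "('a::real_normed_vector \<Rightarrow> real) \<Rightarrow> 'a \<Rightarrow> (nat \<times> ('a \<Rightarrow> real)) list \<Rightarrow> (nat \<times> ('a \<Rightarrow> real)) list" where
  "DR \<eta> v ps = concat (map (\<lambda>p. [(Suc (fst p), \<lambda>x. - real (fst p) * frechet_derivative \<eta> (at x) v * snd p x), (fst p, \<lambda>x. frechet_derivative (snd p) (at x) v)]) ps)"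

lemma SR_deriv:
  assumes eta: "smooth \<eta>" "\<forall>x. \<eta> x \<noteq> 0" and "\<forall>p\<in>set ps. smooth (snd p)"
  shows "(SR \<eta> ps has_derivative (\<lambda>v. SR \<eta> (DR \<eta> v ps) x)) (at x)"
  using assms(3)
proof (induction ps)
  case Nil then show ?case by (simp add: SR_def DR_def)
next
  case (Cons p ps)
  obtain j q where p: "p = (j, q)" by force
  have w: "((\<lambda>x. inverse (\<eta> x)) has_derivative (\<lambda>h. - (inverse (\<eta> x) * frechet_derivative \<eta> (at x) h * inverse (\<eta> x)))) (at x)"
    by (rule Deriv.has_derivative_inverse) (use eta in \<open>auto intro: smooth_hasd\<close>)
  have 1: "((\<lambda>x. inverse (\<eta> x) ^ j * q x) has_derivative (\<lambda>v. inverse (\<eta> x) ^ j * frechet_derivative q (at x) v + (of_nat j * (- (inverse (\<eta> x) * frechet_derivative \<eta> (at x) v * inverse (\<eta> x))) * inverse (\<eta> x) ^ (j - 1)) * q x)) (at x)"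
    using Cons.prems p by (intro has_derivative_mult has_derivative_power w smooth_hasd) auto
  have e: "(of_nat j * (- (inverse (\<eta> x) * d * inverse (\<eta> x))) * inverse (\<eta> x) ^ (j - 1)) * q x
       = inverse (\<eta> x) ^ Suc j * (- real j * d * q x)" for d
    by (cases j) (auto simp: algebra_simps)
  have "((\<lambda>x. inverse (\<eta> x) ^ j * q x + SR \<eta> ps x) has_derivative (\<lambda>v. (inverse (\<eta> x) ^ j * frechet_derivative q (at x) v + (of_nat j * (- (inverse (\<eta> x) * frechet_derivative \<eta> (at x) v * inverse (\<eta> x))) * inverse (\<eta> x) ^ (j - 1)) * q x) + SR \<eta> (DR \<eta> v ps) x)) (at x)"
    using Cons by (intro has_derivative_add 1) auto
  then show ?case unfolding e by (simp add: SR_def DR_def algebra_simps p)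
qed

lemma DR_valid: "smooth \<eta> \<Longrightarrow> \<forall>p\<in>set ps. smooth (snd p) \<Longrightarrow> \<forall>p\<in>set (DR \<eta> v ps). smooth (snd p)"
  by (auto simp: DR_def smooth_D intro!: smooth_minus smooth_mult[OF smooth_mult] smooth_const smooth_D)

lemma SR_smooth: assumes eta: "smooth \<eta>" "\<forall>x. \<eta> x \<noteq> 0" and "\<forall>p\<in>set ps. smooth (snd p)" shows "smooth (SR \<eta> ps)"
proof (rule smooth_coind[where P="\<lambda>h. \<exists>ps. (\<forall>p\<in>set ps. smooth (snd p)) \<and> h = SR \<eta> ps"])
  fix g :: "'a \<Rightarrow> real"
  assume "\<exists>ps. (\<forall>p\<in>set ps. smooth (snd p)) \<and> g = SR \<eta> ps"
  then obtain ps where ps: "\<forall>p\<in>set ps. smooth (snd p)" "g = SR \<eta> ps" by blast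
  show "(\<forall>x. g differentiable at x) \<and> (\<forall>v. \<exists>g'. (\<exists>ps. (\<forall>p\<in>set ps. smooth (snd p)) \<and> g' = SR \<eta> ps) \<and> (\<forall>x. frechet_derivative g (at x) v = g' x))"
  proof (intro conjI allI)
    fix x show "g differentiable at x" using SR_deriv[OF eta ps(1)] ps(2) differentiable_def by blast
  next
    fix v show "\<exists>g'. (\<exists>ps. (\<forall>p\<in>set ps. smooth (snd p)) \<and> g' = SR \<eta> ps) \<and> (\<forall>x. frechet_derivative g (at x) v = g' x)"
      using DR_valid[OF eta(1) ps(1)] frechet_derivative_at[OF SR_deriv[OF eta ps(1)]] ps(2)
      by (intro exI[of _ "SR \<eta> (DR \<eta> v ps)"]) metis
  qed
qed (use assms in auto)

lemma smooth_inverse: "smooth \<eta> \<Longrightarrow> \<forall>x. \<eta> x \<noteq> 0 \<Longrightarrow> smooth (\<lambda>x. inverse (\<eta> x) :: real)"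
  using SR_smooth[of \<eta> "[(1, \<lambda>x. 1)]"] by (simp add: SR_def[abs_def] smooth_const)

definition entire :: "(nat \<Rightarrow> real) \<Rightarrow> bool" where
  "entire c \<longleftrightarrow> (\<forall>y. summable (\<lambda>n. c n * y ^ n))"

definition PS :: "(nat \<Rightarrow> real) \<Rightarrow> real \<Rightarrow> real" where
  "PS c t = (\<Sum>n. c n * t ^ n)"

definition SC :: "((nat \<Rightarrow> real) \<times> ('a::real_inner \<Rightarrow> real)) list \<Rightarrow> 'a \<Rightarrow> real" where
  "SC ps p = sum_list (map (\<lambda>cq. PS (fst cq) (p \<bullet> p) * snd cq p) ps)"

definition DC :: "'a::real_inner \<Rightarrow> ((nat \<Rightarrow> real) \<times> ('a \<Rightarrow> real)) list \<Rightarrow> ((nat \<Rightarrow> real) \<times> ('a \<Rightarrow> real)) list" where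
  "DC v ps = concat (map (\<lambda>cq. [(diffs (fst cq), \<lambda>p. (p \<bullet> v + v \<bullet> p) * snd cq p), (fst cq, \<lambda>p. frechet_derivative (snd cq) (at p) v)]) ps)"

lemma PS_deriv: "entire c \<Longrightarrow> (PS c has_field_derivative PS (diffs c) t) (at t)"
  unfolding PS_def[abs_def] entire_def using termdiffs_strong_converges_everywhere by blast

lemma entire_diffs: "entire c \<Longrightarrow> entire (diffs c)"
  unfolding entire_def using termdiff_converges_all by blast

lemma SC_deriv:
  assumes "\<forall>cq\<in>set ps. entire (fst cq) \<and> smooth (snd cq)"
  shows "(SC ps has_derivative (\<lambda>v. SC (DC v ps) x)) (at x)"
  using assms
proof (induction ps)
  case Nil then show ?case by (simp add: SC_def DC_def)
next
  case (Cons cq ps)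
  obtain c q where cq: "cq = (c, q)" by force
  have t: "((\<lambda>p. p \<bullet> p) has_derivative (\<lambda>h. x \<bullet> h + h \<bullet> x)) (at x)"
    by (rule has_derivative_inner) (auto intro: has_derivative_ident)
  have f: "((\<lambda>p. PS c (p \<bullet> p)) has_derivative (\<lambda>h. (x \<bullet> h + h \<bullet> x) * PS (diffs c) (x \<bullet> x))) (at x)"
    using has_derivative_compose[OF t PS_deriv[of c "x \<bullet> x", unfolded has_field_derivative_def]] Cons.prems cq
    by (simp add: o_def mult.commute)
  have 1: "((\<lambda>p. PS c (p \<bullet> p) * q p) has_derivative (\<lambda>v. PS c (x \<bullet> x) * frechet_derivative q (at x) v + ((x \<bullet> v + v \<bullet> x) * PS (diffs c) (x \<bullet> x)) * q x)) (at x)"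
    using Cons.prems cq by (intro has_derivative_mult f smooth_hasd) auto
  have "((\<lambda>p. PS c (p \<bullet> p) * q p + SC ps p) has_derivative (\<lambda>v. (PS c (x \<bullet> x) * frechet_derivative q (at x) v + ((x \<bullet> v + v \<bullet> x) * PS (diffs c) (x \<bullet> x)) * q x) + SC (DC v ps) x)) (at x)"
    using Cons by (intro has_derivative_add 1) auto
  then show ?case by (simp add: SC_def DC_def algebra_simps cq)
qed

lemma smooth_inner_sym: "smooth (\<lambda>p::'a::real_inner. p \<bullet> v + v \<bullet> p)"
  by (intro smooth_add smooth_linear bounded_linear_inner_left bounded_linear_inner_right)

lemma DC_valid: "\<forall>cq\<in>set ps. entire (fst cq) \<and> smooth (snd cq) \<Longrightarrow> \<forall>cq\<in>set (DC v ps). entire (fst cq) \<and> smooth (snd cq)"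
  by (auto simp: DC_def smooth_D entire_diffs intro!: smooth_mult[OF smooth_inner_sym])

lemma SC_smooth: assumes "\<forall>cq\<in>set ps. entire (fst cq) \<and> smooth (snd cq)" shows "smooth (SC ps)"
proof (rule smooth_coind[where P="\<lambda>h. \<exists>ps. (\<forall>cq\<in>set ps. entire (fst cq) \<and> smooth (snd cq)) \<and> h = SC ps"])
  fix g :: "'a \<Rightarrow> real"
  assume "\<exists>ps. (\<forall>cq\<in>set ps. entire (fst cq) \<and> smooth (snd cq)) \<and> g = SC ps"
  then obtain ps where ps: "\<forall>cq\<in>set ps. entire (fst cq) \<and> smooth (snd cq)" "g = SC ps" by blast
  show "(\<forall>x. g differentiable at x) \<and> (\<forall>v. \<exists>g'. (\<exists>ps. (\<forall>cq\<in>set ps. entire (fst cq) \<and> smooth (snd cq)) \<and> g' = SC ps) \<and> (\<forall>x. frechet_derivative g (at x) v = g' x))"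
  proof (intro conjI allI)
    fix x show "g differentiable at x" using SC_deriv[OF ps(1)] ps(2) differentiable_def by blast
  next
    fix v show "\<exists>g'. (\<exists>ps. (\<forall>cq\<in>set ps. entire (fst cq) \<and> smooth (snd cq)) \<and> g' = SC ps) \<and> (\<forall>x. frechet_derivative g (at x) v = g' x)"
      using DC_valid[OF ps(1)] frechet_derivative_at[OF SC_deriv[OF ps(1)]] ps(2)
      by (intro exI[of _ "SC (DC v ps)"]) metis
  qed
qed (use assms in auto)

lemma smooth_PS_norm: "entire c \<Longrightarrow> smooth (\<lambda>p::'a::real_inner. PS c (p \<bullet> p))"
  using SC_smooth[of "[(c, \<lambda>p. 1)]"] by (simp add: SC_def[abs_def] smooth_const)

lemma majorant:
  fixes Q :: "'a::real_inner \<Rightarrow> real"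
  assumes "\<forall>R. \<exists>B. \<forall>p. norm p \<le> R \<longrightarrow> Q p \<le> B"
  shows "\<exists>M. smooth M \<and> (\<forall>p. Q p \<le> M p)"
proof -
  from assms obtain B where B: "\<And>R p. norm p \<le> R \<Longrightarrow> Q p \<le> B R" by metis
  define mm where "mm k = (\<Sum>j\<le>k. \<bar>B (real j)\<bar>)" for k :: nat
  have mm_ge: "Q p \<le> mm k" if "norm p \<le> real k" for p k
  proof -
    have "Q p \<le> \<bar>B (real k)\<bar>" using B[OF that] by linarith
    also have "\<dots> \<le> mm k" unfolding mm_def by (rule member_le_sum) auto
    finally show ?thesis .
  qed
  have mm_nn: "0 \<le> mm k" for k unfolding mm_def by (auto intro: sum_nonneg)
  have mm_mono: "mm j \<le> mm k" if "j \<le> k" for j k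
    unfolding mm_def using that by (intro sum_mono2) auto
  define ne where "ne k = k + nat \<lceil>mm k\<rceil>" for k
  have sm: "strict_mono ne"
    unfolding strict_mono_def ne_def
  proof (intro allI impI)
    fix j k :: nat assume "j < k"
    then have "mm j \<le> mm k" by (intro mm_mono) auto
    then have "nat \<lceil>mm j\<rceil> \<le> nat \<lceil>mm k\<rceil>" by (intro nat_mono ceiling_mono)
    then show "j + nat \<lceil>mm j\<rceil> < k + nat \<lceil>mm k\<rceil>" using \<open>j < k\<close> by linarith
  qed
  then have inj: "inj ne" using strict_mono_imp_inj_on by blast
  have ne_ge: "mm k \<le> real (ne k)" for k
    unfolding ne_def by (simp add: mm_nn) linarith
  define a where "a k = (if 2 \<le> k then mm k / (real k - 1) ^ (2 * ne k) else 0)" for k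
  define c where "c n = (if n \<in> range ne then a (inv ne n) else 0)" for n
  have c_ne: "c (ne k) = a k" for k unfolding c_def using inj by auto
  have c_nn: "0 \<le> c n" for n unfolding c_def a_def by (auto intro!: divide_nonneg_nonneg mm_nn)
  have ent: "entire c" unfolding entire_def
  proof
    fix y :: real
    define T where "T = \<bar>y\<bar>"
    define K where "K = nat \<lceil>4 * T\<rceil> + 2"
    have T0: "0 \<le> T" unfolding T_def by simp
    have "eventually (\<lambda>n. norm (c n * y ^ n) \<le> (1/2) ^ n) sequentially"
      unfolding eventually_sequentially
    proof (intro exI allI impI)
      fix n assume n: "ne K \<le> n"
      show "norm (c n * y ^ n) \<le> (1/2) ^ n"
      proof (cases "n \<in> range ne")
        case False then show ?thesis by (simp add: c_def)
      next
        case True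
        then obtain k where nk: "n = ne k" by blast
        have kK: "K \<le> k" using n nk sm by (metis linorder_not_le strict_mono_less)
        then have k2: "2 \<le> k" unfolding K_def by simp
        have k1: "4 * T \<le> real k - 1" using kK unfolding K_def by linarith
        have k1': "1 \<le> real k - 1" using k2 by simp
        have sq: "4 * T \<le> (real k - 1) ^ 2" using k1 k1' proof -
          have "(real k - 1) * 1 \<le> (real k - 1) * (real k - 1)" using k1' by (intro mult_left_mono) auto
          then show ?thesis using k1 by (simp add: power2_eq_square)
        qed
        have kpos: "0 < (real k - 1) ^ 2" using k1' by simp
        have ratio: "T / (real k - 1) ^ 2 \<le> 1/4" using sq kpos by (simp add: divide_simps)
        have "norm (c n * y ^ n) = mm k * (T / (real k - 1) ^ 2) ^ n"
        proof -
          have "norm (c n * y ^ n) = c n * T ^ n" using c_nn by (simp add: abs_mult power_abs T_def)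
          also have "\<dots> = mm k / ((real k - 1) ^ 2) ^ n * T ^ n" using nk c_ne k2 by (simp add: a_def power_mult)
          also have "\<dots> = mm k * (T / (real k - 1) ^ 2) ^ n" by (simp add: power_divide)
          finally show ?thesis .
        qed
        also have "\<dots> \<le> mm k * (1/4) ^ n"
          using ratio T0 kpos mm_nn by (intro mult_left_mono power_mono) auto
        also have "\<dots> \<le> 2 ^ n * (1/4) ^ n"
        proof -
          have "mm k \<le> real n" using ne_ge nk by simp
          also have "\<dots> \<le> 2 ^ n" using less_exp[of n] by (metis less_imp_le of_nat_le_iff of_nat_numeral of_nat_power)
          finally show ?thesis by (intro mult_right_mono) auto
        qed
        also have "\<dots> = (1/2) ^ n" by (simp add: power_mult_distrib[symmetric])
        finally show ?thesis .
      qed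
    qed
    then show "summable (\<lambda>n. c n * y ^ n)"
      by (rule summable_comparison_test_ev) (simp add: summable_geometric)
  qed
  define M where "M p = mm 1 + PS c (p \<bullet> p)" for p :: 'a
  have "smooth M" unfolding M_def by (intro smooth_add smooth_const smooth_PS_norm ent)
  moreover have "Q p \<le> M p" for p
  proof -
    define k where "k = nat \<lceil>norm p\<rceil>"
    have np: "norm p \<le> real k" unfolding k_def by linarith
    have "real k = of_int \<lceil>norm p\<rceil>" unfolding k_def by simp
    then have np2: "real k - 1 < norm p" by linarith
    have summ: "summable (\<lambda>n. c n * (p \<bullet> p) ^ n)" using ent entire_def by blast
    have PS_nn: "0 \<le> PS c (p \<bullet> p)"
      unfolding PS_def by (rule suminf_nonneg[OF summ]) (simp add: c_nn)
    show ?thesis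
    proof (cases "k \<le> 1")
      case True
      then show ?thesis using mm_ge[OF np] mm_mono[OF True] PS_nn unfolding M_def by linarith
    next
      case False
      then have k2: "2 \<le> k" by simp
      have pp: "p \<bullet> p = (norm p) ^ 2" by (simp add: power2_norm_eq_inner)
      have k1: "0 < real k - 1" using k2 by simp
      have le: "((real k - 1) ^ 2) ^ ne k \<le> (p \<bullet> p) ^ ne k"
        unfolding pp using np2 k1 by (intro power_mono) auto
      have "mm k = a k * ((real k - 1) ^ 2) ^ ne k"
        using k2 k1 by (simp add: a_def power_mult[symmetric])
      also have "\<dots> \<le> c (ne k) * (p \<bullet> p) ^ ne k"
        unfolding c_ne using le k2 mm_nn k1 by (intro mult_left_mono) (auto simp: a_def)
      also have "\<dots> \<le> PS c (p \<bullet> p)"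
        unfolding PS_def using sum_le_suminf[OF summ, of "{ne k}"] c_nn by (simp add: zero_le_mult_iff)
      finally show ?thesis using mm_ge[OF np] mm_nn[of 1] unfolding M_def by linarith
    qed
  qed
  ultimately show ?thesis by blast
qed

lemma loc_bdd_cont:
  fixes F :: "'a::euclidean_space \<Rightarrow> 'b::real_normed_vector"
  assumes "continuous_on UNIV F"
  shows "\<exists>B. \<forall>p. norm p \<le> R \<longrightarrow> norm (F p) \<le> B"
proof -
  have "compact (F ` cball 0 R)"
    by (rule compact_continuous_image) (auto intro: continuous_on_subset[OF assms])
  then obtain B where "\<forall>y\<in>F ` cball 0 R. norm y \<le> B"
    using compact_imp_bounded bounded_pos by metis
  then show ?thesis by (intro exI[of _ B]) (auto simp: dist_norm)
qed

lemma lin_bound: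
  fixes L :: "'a::euclidean_space \<Rightarrow> 'b::real_normed_vector"
  assumes "linear L"
  shows "norm (L u) \<le> norm u * (\<Sum>b\<in>Basis. norm (L b))"
proof -
  have "L u = L (\<Sum>b\<in>Basis. (u \<bullet> b) *\<^sub>R b)" by (simp add: euclidean_representation)
  also have "\<dots> = (\<Sum>b\<in>Basis. (u \<bullet> b) *\<^sub>R L b)"
    using assms by (simp add: linear_sum linear_scale)
  finally have "norm (L u) \<le> (\<Sum>b\<in>Basis. norm ((u \<bullet> b) *\<^sub>R L b))"
    by (metis norm_sum)
  also have "\<dots> \<le> (\<Sum>b\<in>Basis. norm u * norm (L b))"
    by (intro sum_mono) (auto intro!: mult_right_mono simp: Basis_le_norm)
  finally show ?thesis by (simp add: sum_distrib_left)
qed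

lemma loc_lip_smooth:
  fixes F :: "'a::euclidean_space \<Rightarrow> 'b::real_normed_vector"
  assumes F: "smooth F"
  shows "\<exists>B. \<forall>p q. norm p \<le> R \<longrightarrow> norm q \<le> R \<longrightarrow> norm (F p - F q) \<le> B * norm (p - q)"
proof -
  define D where "D p = (\<Sum>b\<in>Basis. norm (frechet_derivative F (at p) b))" for p
  have cD: "continuous_on UNIV D"
    unfolding D_def by (intro continuous_intros smooth_cont_on smooth_D[OF F])
  obtain B where B: "\<And>p. norm p \<le> R \<Longrightarrow> norm (D p) \<le> B" using loc_bdd_cont[OF cD] by metis
  have "norm (F p - F q) \<le> B * norm (p - q)" if "norm p \<le> R" "norm q \<le> R" for p q
  proof (rule differentiable_bound[where S="cball 0 R" and f'="\<lambda>p. frechet_derivative F (at p)"])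
    show "convex (cball (0::'a) R)" by (rule convex_cball)
    show "(F has_derivative frechet_derivative F (at x)) (at x within cball 0 R)" for x
      using smooth_hasd[OF F] has_derivative_at_withinI by blast
    show "onorm (frechet_derivative F (at x)) \<le> B" if "x \<in> cball 0 R" for x
    proof (rule onorm_le)
      fix u
      have lin: "linear (frechet_derivative F (at x))"
        using smooth_hasd[OF F] has_derivative_linear by blast
      have "norm (frechet_derivative F (at x) u) \<le> norm u * D x"
        unfolding D_def by (rule lin_bound[OF lin])
      also have "\<dots> \<le> B * norm u" 
      proof -
        have "D x \<le> B" using B[of x] that by simp
        then show ?thesis using mult_left_mono[of "D x" B "norm u"] by (simp add: mult.commute)
      qed
      finally show "norm (frechet_derivative F (at x) u) \<le> B * norm u" .
    qed
  qed (use that in auto)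
  then show ?thesis by blast
qed

lemma partial_fst:
  assumes "smooth F"
  shows "((\<lambda>x'. F (x', z)) has_derivative (\<lambda>u. frechet_derivative F (at (x, z)) (u, 0))) (at x)"
proof -
  have "((\<lambda>x'. (x', z)) has_derivative (\<lambda>u. (u, 0))) (at x)"
    by (auto intro!: derivative_eq_intros)
  from has_derivative_compose[OF this smooth_hasd[OF assms]] show ?thesis by (simp add: o_def)
qed

lemma partial_snd:
  assumes "smooth F"
  shows "((\<lambda>z'. F (x, z')) has_derivative (\<lambda>u. frechet_derivative F (at (x, z)) (0, u))) (at z)"
proof -
  have "((\<lambda>z'. (x, z')) has_derivative (\<lambda>u. (0, u))) (at z)"
    by (auto intro!: derivative_eq_intros)
  from has_derivative_compose[OF this smooth_hasd[OF assms]] show ?thesis by (simp add: o_def)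
qed

lemma partial_snd_real:
  assumes "smooth F"
  shows "((\<lambda>z'::real. F (x, z')) has_real_derivative frechet_derivative F (at (x, z)) (0, 1)) (at z)"
proof -
  have lin: "linear (frechet_derivative F (at (x, z)))"
    using smooth_hasd[OF assms] has_derivative_linear by blast
  have "(\<lambda>u. frechet_derivative F (at (x, z)) (0, u)) = (\<lambda>u. u * frechet_derivative F (at (x, z)) (0, 1))"
  proof
    fix u :: real
    have "(0::'a, u) = u *\<^sub>R (0, 1)" by simp
    then show "frechet_derivative F (at (x, z)) (0, u) = u * frechet_derivative F (at (x, z)) (0, 1)"
      using linear_scale[OF lin, of u "(0,1)"] by simp
  qed
  then show ?thesis using partial_snd[OF assms, of x z] unfolding has_field_derivative_def
    by (simp add: mult.commute[of _ "frechet_derivative F (at (x, z)) (0, 1)"])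
qed

lemma young: assumes "0 < (\<delta>::real)" shows "x * y \<le> \<delta> * x\<^sup>2 + y\<^sup>2 / (4 * \<delta>)"
proof -
  have "0 \<le> (2 * \<delta> * x - y)\<^sup>2" by simp
  then have "4 * \<delta> * (x * y) \<le> 4 * \<delta> * (\<delta> * x\<^sup>2 + y\<^sup>2 / (4 * \<delta>))"
    using assms by (simp add: power2_eq_square algebra_simps)
  then show ?thesis using assms by simp
qed

definition Qf :: "real \<Rightarrow> real \<Rightarrow> real \<Rightarrow> real \<Rightarrow> real \<Rightarrow> real \<Rightarrow> real \<Rightarrow> real" where
  "Qf a c L E V u Y = c/4 + L/2 + L*E/2 + 6*L^3 + (6*L^3*(1+L))\<^sup>2 * L * 3/(2*c)
     + L^2 * V * 3/(2*c) + (6*L^3*(u+Y))\<^sup>2 * L / a + (2*L^2)\<^sup>2 * L / a"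

lemma core:
  fixes a c L E u Y V s dn t T1 T2 T3 T4 T5 T6 T7 :: real
  assumes L1: "1 \<le> L" and a: "0 < a" and c: "0 < c"
    and E: "0 \<le> E" and u: "0 \<le> u" and Y: "0 \<le> Y" and V: "0 \<le> V" and s: "0 \<le> s" and dn: "0 \<le> dn"
    and uV: "u\<^sup>2 \<le> L * V" and YE: "Y \<le> E + L * u"
    and t: "0 \<le> t" "t \<le> L + s"
    and T1: "T1 \<le> L * E\<^sup>2 / 2"
    and T2: "T2 \<le> E * L\<^sup>2 * u * (1 + t)"
    and T3: "T3 \<le> E * L * (L * u + Y * L * (1 + t) + L * u * t + L * dn)"
    and T4: "T4 \<le> E * L * (V + E\<^sup>2 / 2)"
    and T5: "T5 \<le> E * L * (u + Y)"
    and T6: "T6 \<le> E * L * (u + Y) * t"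
    and T7: "T7 \<le> E * L * dn"
  shows "T1 + T2 + T3 + T4 + T5 + T6 + T7 \<le> (c/3) * V + a * (s\<^sup>2 + dn\<^sup>2) / (4 * L) + E\<^sup>2 * (Qf a c L E V u Y - c/4)"
proof -
  have L0: "0 < L" using L1 by simp
  have l12: "L \<le> L^2" "L^2 \<le> L^3" "L \<le> L^3"
    using power_increasing[OF _ L1, of 1 2] power_increasing[OF _ L1, of 2 3] power_increasing[OF _ L1, of 1 3] by auto
  define A where "A = L^3 * (E * u)"
  define B where "B = L^3 * (E * Y)"
  define C where "C = L^3 * s * (E * u)"
  define D where "D = L^3 * s * (E * Y)"
  have Eu: "0 \<le> E * u" "0 \<le> E * Y" "0 \<le> E * dn" using E u Y dn by auto
  have ABCD: "0 \<le> A" "0 \<le> B" "0 \<le> C" "0 \<le> D" using Eu s L0 by (auto simp: A_def B_def C_def D_def)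
  have m2: "L^2 * X \<le> L^3 * X" if "0 \<le> X" for X using l12 that by (intro mult_right_mono) auto
  have m1: "L * X \<le> L^3 * X" if "0 \<le> X" for X using l12 that by (intro mult_right_mono) auto
  have b2: "T2 \<le> 2 * A + C"
  proof -
    have "T2 \<le> (E * u) * (L\<^sup>2 * (1 + t))" using T2 by (simp add: algebra_simps)
    also have "\<dots> \<le> (E * u) * (L\<^sup>2 * (1 + L + s))" using t Eu by (intro mult_left_mono) auto
    also have "\<dots> = L^2 * (E * u) + L^3 * (E*u) + L^2 * (s * (E*u))" by (simp add: algebra_simps power2_eq_square power3_eq_cube)
    also have "\<dots> \<le> L^3 * (E * u) + L^3 * (E*u) + L^3 * (s * (E*u))"
      using Eu s by (intro add_mono m2 order_refl) auto
    finally show ?thesis by (simp add: A_def C_def algebra_simps)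
  qed
  have b3: "T3 \<le> 2 * A + C + 2 * B + D + L^2 * (E * dn)"
  proof -
    have "T3 \<le> (E * u) * (L^2 + L^2 * t) + (E * Y) * (L^2 * (1 + t)) + L^2 * (E * dn)"
      using T3 by (simp add: algebra_simps power2_eq_square)
    also have "\<dots> \<le> (E * u) * (L^2 + L^2 * (L + s)) + (E * Y) * (L^2 * (1 + (L + s))) + L^2 * (E * dn)"
      using t Eu by (intro add_mono mult_left_mono order_refl) auto
    also have "\<dots> = L^2 * (E * u) + L^3 * (E*u) + L^2 * (s * (E*u)) + (L^2 * (E * Y) + L^3 * (E*Y) + L^2 * (s * (E*Y))) + L^2 * (E * dn)"
      by (simp add: algebra_simps power2_eq_square power3_eq_cube)
    also have "\<dots> \<le> L^3 * (E * u) + L^3 * (E*u) + L^3 * (s * (E*u)) + (L^3 * (E * Y) + L^3 * (E*Y) + L^3 * (s * (E*Y))) + L^2 * (E * dn)"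
      using Eu s by (intro add_mono m2 order_refl) auto
    finally show ?thesis by (simp add: A_def B_def C_def D_def algebra_simps)
  qed
  have b5: "T5 \<le> A + B"
  proof -
    have "T5 \<le> L * (E * u) + L * (E * Y)" using T5 by (simp add: algebra_simps)
    also have "\<dots> \<le> L^3 * (E * u) + L^3 * (E * Y)" using Eu by (intro add_mono m1) auto
    finally show ?thesis by (simp add: A_def B_def)
  qed
  have b6: "T6 \<le> A + B + C + D"
  proof -
    have "T6 \<le> (E * u + E * Y) * (L * t)" using T6 by (simp add: algebra_simps)
    also have "\<dots> \<le> (E * u + E * Y) * (L * (L + s))" using t Eu L0 by (intro mult_left_mono) auto
    also have "\<dots> = L^2 * (E * u) + L^2 * (E * Y) + L * (s * (E * u)) + L * (s * (E * Y))"
      by (simp add: algebra_simps power2_eq_square)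
    also have "\<dots> \<le> L^3 * (E * u) + L^3 * (E * Y) + L^3 * (s * (E * u)) + L^3 * (s * (E * Y))"
      using Eu s by (intro add_mono m1 m2) auto
    finally show ?thesis by (simp add: A_def B_def C_def D_def algebra_simps)
  qed
  have b7: "T7 \<le> L^2 * (E * dn)" using T7 m1[of "E*dn"] l12 Eu
    by (smt (verit) mult.assoc mult.commute mult_right_mono)
  have YB: "B \<le> L^3 * E\<^sup>2 + L^3 * L * (E * u)"
  proof -
    have "B \<le> L^3 * (E * (E + L * u))" unfolding B_def using YE E L0 by (intro mult_left_mono) auto
    then show ?thesis by (simp add: algebra_simps power2_eq_square)
  qed
  have pA: "6 * (A + B) \<le> 6 * L^3 * E\<^sup>2 + ((c/(6*L)) * u\<^sup>2 + (E * (6 * L^3 * (1 + L)))\<^sup>2 / (4 * (c/(6*L))))"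
  proof -
    have "6 * (A + B) \<le> 6 * L^3 * E\<^sup>2 + u * (E * (6 * L^3 * (1 + L)))"
      using YB by (simp add: A_def algebra_simps)
    also have "\<dots> \<le> 6 * L^3 * E\<^sup>2 + ((c/(6*L)) * u\<^sup>2 + (E * (6 * L^3 * (1 + L)))\<^sup>2 / (4 * (c/(6*L))))"
      using young[of "c/(6*L)" u] c L0 by simp
    finally show ?thesis .
  qed
  have uV': "(c/(6*L)) * u\<^sup>2 \<le> (c/6) * V"
  proof -
    have "(c/(6*L)) * u\<^sup>2 \<le> (c/(6*L)) * (L * V)" using uV c L0 by (intro mult_left_mono) auto
    then show ?thesis using L0 by simp
  qed
  have eA0: "(E * X)\<^sup>2 / (4 * (c/(6*L))) = E\<^sup>2 * (X\<^sup>2 * L * 3/(2*c))" for X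
    using c L0 by (simp add: power_mult_distrib field_simps)
  note eA = eA0[of "6 * L^3 * (1 + L)"]
  have eB0: "(E * X)\<^sup>2 / (4 * (a/(4*L))) = E\<^sup>2 * (X\<^sup>2 * L / a)" for X
    using a L0 by (simp add: power_mult_distrib field_simps)
  have pB: "6 * (C + D) \<le> a * s\<^sup>2 / (4 * L) + E\<^sup>2 * ((6*L^3*(u+Y))\<^sup>2 * L / a)"
  proof -
    have "6 * (C + D) = s * (E * (6 * L^3 * (u + Y)))" by (simp add: C_def D_def algebra_simps)
    also have "\<dots> \<le> (a/(4*L)) * s\<^sup>2 + (E * (6 * L^3 * (u + Y)))\<^sup>2 / (4 * (a/(4*L)))"
      using young[of "a/(4*L)"] a L0 by simp
    also have "\<dots> = a * s\<^sup>2 / (4 * L) + E\<^sup>2 * ((6*L^3*(u+Y))\<^sup>2 * L / a)"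
      unfolding eB0 using a L0 by simp
    finally show ?thesis .
  qed
  have pC: "2 * L^2 * (E * dn) \<le> a * dn\<^sup>2 / (4 * L) + E\<^sup>2 * ((2*L^2)\<^sup>2 * L / a)"
  proof -
    have "2 * L^2 * (E * dn) = dn * (E * (2 * L^2))" by (simp add: algebra_simps)
    also have "\<dots> \<le> (a/(4*L)) * dn\<^sup>2 + (E * (2 * L^2))\<^sup>2 / (4 * (a/(4*L)))"
      using young[of "a/(4*L)"] a L0 by simp
    also have "\<dots> = a * dn\<^sup>2 / (4 * L) + E\<^sup>2 * ((2*L^2)\<^sup>2 * L / a)"
      unfolding eB0 using a L0 by simp
    finally show ?thesis .
  qed
  have b4: "T4 \<le> (c/6) * V + E\<^sup>2 * (L^2 * V * 3/(2*c)) + E\<^sup>2 * (L * E / 2)"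
  proof -
    have sq: "E * L \<le> c/6 + E\<^sup>2 * (L^2 * 3/(2*c))"
    proof -
      have "0 \<le> (3/(2*c)) * (E * L - c/3)\<^sup>2" using c by simp
      then show ?thesis using c by (simp add: power2_eq_square field_simps)
    qed
    have "T4 \<le> (E * L) * V + E\<^sup>2 * (L * E / 2)" using T4 by (simp add: algebra_simps power2_eq_square)
    also have "\<dots> \<le> (c/6 + E\<^sup>2 * (L^2 * 3/(2*c))) * V + E\<^sup>2 * (L * E / 2)"
      using sq V E L0 by (intro add_mono mult_right_mono) auto
    finally show ?thesis by (simp add: algebra_simps)
  qed
  have "T1 + T2 + T3 + T4 + T5 + T6 + T7 \<le> L * E\<^sup>2 / 2 + 6 * (A + B) + 6 * (C + D) + 2 * (L^2 * (E * dn)) + T4"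
    using T1 b2 b3 b5 b6 b7 ABCD by (smt (verit))
  also have "\<dots> \<le> (c/3) * V + a * (s\<^sup>2 + dn\<^sup>2) / (4 * L) + E\<^sup>2 * (Qf a c L E V u Y - c/4)"
  proof -
    have ex: "E\<^sup>2 * (Qf a c L E V u Y - c/4) = L * E\<^sup>2 / 2 + E\<^sup>2 * (L * E / 2) + 6 * L^3 * E\<^sup>2
       + E\<^sup>2 * ((6*L^3*(1+L))\<^sup>2 * L * 3/(2*c)) + E\<^sup>2 * (L^2 * V * 3/(2*c))
       + E\<^sup>2 * ((6*L^3*(u+Y))\<^sup>2 * L / a) + E\<^sup>2 * ((2*L^2)\<^sup>2 * L / a)"
      unfolding Qf_def by (simp add: algebra_simps)
    have sp: "a * (s\<^sup>2 + dn\<^sup>2) / (4 * L) = a * s\<^sup>2 / (4 * L) + a * dn\<^sup>2 / (4 * L)"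
      by (simp add: add_divide_distrib algebra_simps)
    show ?thesis unfolding ex sp using pA pB pC b4 uV' eA by linarith
  qed
  finally show ?thesis .
qed

lemma norm_xz: "norm (x, z) \<le> norm (x, (y::real, z::real))"
  by (simp add: norm_Pair)
lemma norm_xy: "norm (x, y) \<le> norm (x, (y::real, z::real))"
  by (simp add: norm_Pair)
lemma norm_x3: "norm x \<le> norm (x, (y::real, z::real))"
  by (rule norm_fst_le)
lemma norm_y3: "\<bar>y\<bar> \<le> norm (x, (y::real, z::real))"
  unfolding norm_Pair by (rule real_le_rsqrt) simp
lemma norm_z3: "\<bar>z\<bar> \<le> norm (x, (y::real, z::real))"
  unfolding norm_Pair by (rule real_le_rsqrt) simp

lemma norm_mv: "norm ((A::real^'m^'k) *v v) \<le> (real CARD('k) * real CARD('m) * norm A) * norm v"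
proof -
  have "norm (A *v v) \<le> onorm ((*v) A) * norm v"
    by (rule onorm) simp
  also have "onorm ((*v) A) \<le> (\<Sum>i\<in>UNIV. \<Sum>j\<in>UNIV. \<bar>A $ i $ j\<bar>)"
    by (rule onorm_le_matrix_component_sum)
  also have "\<dots> \<le> (\<Sum>i\<in>(UNIV::'k set). \<Sum>j\<in>(UNIV::'m set). norm A)"
    by (intro sum_mono) (metis component_le_norm_cart Finite_Cartesian_Product.norm_nth_le order_trans)
  finally show ?thesis by (simp add: mult_right_mono)
qed

lemma bounded_linear_xz: "bounded_linear (\<lambda>p::'a::real_normed_vector \<times> real \<times> real. (fst p, snd (snd p)))"
  by (intro bounded_linear_Pair bounded_linear_fst bounded_linear_compose[OF bounded_linear_snd bounded_linear_snd])
lemma bounded_linear_xy: "bounded_linear (\<lambda>p::'a::real_normed_vector \<times> real \<times> real. (fst p, fst (snd p)))"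
  by (intro bounded_linear_Pair bounded_linear_fst bounded_linear_compose[OF bounded_linear_fst bounded_linear_snd])

lemma Qf_mono:
  assumes "0 < a" "0 < c" "0 \<le> L" "L \<le> L'" "0 \<le> E" "E \<le> E'" "0 \<le> V" "V \<le> V'" "0 \<le> u" "u \<le> u'" "0 \<le> Y" "Y \<le> Y'"
  shows "Qf a c L E V u Y \<le> Qf a c L' E' V' u' Y'"
  unfolding Qf_def using assms
  by (intro add_mono mult_mono power_mono divide_right_mono order_refl) auto

lemma Qf_pos: assumes "0 < a" "0 < c" "0 \<le> L" "0 \<le> E" "0 \<le> V" "0 \<le> u" "0 \<le> Y"
  shows "c/4 \<le> Qf a c L E V u Y"
  unfolding Qf_def using assms by (simp add: add_nonneg_nonneg)

lemma bnd_cont_xz: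
  fixes F :: "(real^'n) \<times> real \<Rightarrow> 'b::real_normed_vector"
  assumes "continuous_on UNIV F"
  shows "\<exists>B. \<forall>x y z. norm (x,(y::real,z::real)) \<le> R \<longrightarrow> norm (F (x,z)) \<le> B"
proof -
  obtain B where B: "\<And>q. norm q \<le> R \<Longrightarrow> norm (F q) \<le> B" using loc_bdd_cont[OF assms] by metis
  then show ?thesis
  proof (intro exI[of _ B] allI impI)
    fix x :: "real^'n" and y z :: real assume "norm (x,(y,z)) \<le> R"
    then show "norm (F (x,z)) \<le> B" using B norm_xz[of x z y] by (meson order_trans)
  qed
qed

lemma bnd_cont_xy:
  fixes F :: "(real^'n) \<times> real \<Rightarrow> 'b::real_normed_vector"
  assumes "continuous_on UNIV F"
  shows "\<exists>B. \<forall>x y z. norm (x,(y::real,z::real)) \<le> R \<longrightarrow> norm (F (x,y)) \<le> B"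
proof -
  obtain B where B: "\<And>q. norm q \<le> R \<Longrightarrow> norm (F q) \<le> B" using loc_bdd_cont[OF assms] by metis
  then show ?thesis
  proof (intro exI[of _ B] allI impI)
    fix x :: "real^'n" and y z :: real assume "norm (x,(y,z)) \<le> R"
    then show "norm (F (x,y)) \<le> B" using B norm_xy[of x y z] by (meson order_trans)
  qed
qed

lemma bnd_cont_x:
  fixes F :: "real^'n \<Rightarrow> 'b::real_normed_vector"
  assumes "continuous_on UNIV F"
  shows "\<exists>B. \<forall>x y z. norm (x,(y::real,z::real)) \<le> R \<longrightarrow> norm (F x) \<le> B"
proof -
  obtain B where B: "\<And>q. norm q \<le> R \<Longrightarrow> norm (F q) \<le> B" using loc_bdd_cont[OF assms] by metis
  then show ?thesis
  proof (intro exI[of _ B] allI impI)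
    fix x :: "real^'n" and y z :: real assume "norm (x,(y,z)) \<le> R"
    then show "norm (F x) \<le> B" using B norm_x3[of x y z] by (meson order_trans)
  qed
qed

lemma bnd_cont_z:
  fixes F :: "real \<Rightarrow> real"
  assumes "continuous_on UNIV F"
  shows "\<exists>B. \<forall>x::real^'n. \<forall>y z. norm (x,(y::real,z::real)) \<le> R \<longrightarrow> \<bar>F z\<bar> \<le> B"
proof -
  obtain B where B: "\<And>q. norm q \<le> R \<Longrightarrow> norm (F q) \<le> B" using loc_bdd_cont[OF assms] by metis
  then show ?thesis
  proof (intro exI[of _ B] allI impI)
    fix x :: "real^'n" and y z :: real assume "norm (x,(y,z)) \<le> R"
    then show "\<bar>F z\<bar> \<le> B" using B norm_z3[of z x y] by (metis order_trans real_norm_def)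
  qed
qed

lemma bnd_lip_xz0:
  fixes F :: "(real^'n) \<times> real \<Rightarrow> 'b::real_normed_vector"
  assumes "smooth F" "\<forall>z. F (0, z) = 0"
  shows "\<exists>B. \<forall>x y z. norm (x,(y::real,z::real)) \<le> R \<longrightarrow> norm (F (x,z)) \<le> B * norm x"
proof -
  obtain B where B: "\<And>p q. norm p \<le> R \<Longrightarrow> norm q \<le> R \<Longrightarrow> norm (F p - F q) \<le> B * norm (p - q)"
    using loc_lip_smooth[OF assms(1)] by metis
  have "norm (F (x,z)) \<le> B * norm x" if "norm (x,(y,z)) \<le> R" for x :: "real^'n" and y z :: real
  proof -
    have 1: "norm (x,z) \<le> R" using norm_xz[of x z y] that by linarith
    have "norm (0::real^'n, z) = norm z" by (simp add: norm_Pair)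
    then have 2: "norm (0::real^'n, z) \<le> R" using 1 norm_snd_le[of z x] by linarith
    show ?thesis using B[OF 1 2] assms(2) by simp
  qed
  then show ?thesis by blast
qed

lemma bnd_lip_xy0:
  fixes F :: "(real^'n) \<times> real \<Rightarrow> 'b::real_normed_vector"
  assumes "smooth F" "F (0, 0) = 0"
  shows "\<exists>B. \<forall>x y z. norm (x,(y::real,z::real)) \<le> R \<longrightarrow> norm (F (x,y)) \<le> B * (norm x + \<bar>y\<bar>)"
proof -
  obtain B where B: "\<And>p q. norm p \<le> R \<Longrightarrow> norm q \<le> R \<Longrightarrow> norm (F p - F q) \<le> B * norm (p - q)"
    using loc_lip_smooth[OF assms(1)] by metis
  have "norm (F (x,y)) \<le> \<bar>B\<bar> * (norm x + \<bar>y\<bar>)" if "norm (x,(y,z)) \<le> R" for x :: "real^'n" and y z :: real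
  proof -
    have 1: "norm (x,y) \<le> R" using norm_xy[of x y z] that by linarith
    have 2: "norm (0::(real^'n) \<times> real) \<le> R" using order_trans[OF norm_ge_zero 1] by simp
    have "norm (F (x,y)) \<le> B * norm (x,y)" using B[OF 1 2] assms(2) by (simp add: zero_prod_def)
    also have "\<dots> \<le> \<bar>B\<bar> * norm (x,y)" by (simp add: mult_right_mono)
    also have "\<dots> \<le> \<bar>B\<bar> * (norm x + \<bar>y\<bar>)" using norm_Pair_le[of x y] by (intro mult_left_mono) auto
    finally show ?thesis .
  qed
  then show ?thesis by blast
qed

lemma bnd_lip_x0:
  fixes F :: "real^'n \<Rightarrow> 'b::real_normed_vector"
  assumes "smooth F" "F 0 = 0"
  shows "\<exists>B. \<forall>x y z. norm (x,(y::real,z::real)) \<le> R \<longrightarrow> norm (F x) \<le> B * norm x"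
proof -
  obtain B where B: "\<And>p q. norm p \<le> R \<Longrightarrow> norm q \<le> R \<Longrightarrow> norm (F p - F q) \<le> B * norm (p - q)"
    using loc_lip_smooth[OF assms(1)] by metis
  have "norm (F x) \<le> B * norm x" if "norm (x,(y,z)) \<le> R" for x :: "real^'n" and y z :: real
  proof -
    have 1: "norm x \<le> R" using norm_x3[of x y z] that by linarith
    have 2: "norm (0::real^'n) \<le> R" using order_trans[OF norm_ge_zero 1] by simp
    show ?thesis using B[OF 1 2] assms(2) by simp
  qed
  then show ?thesis by blast
qed

lemma tb: "\<bar>X\<bar> \<le> B \<Longrightarrow> e * X \<le> \<bar>e\<bar> * (B::real)"
  by (metis abs_ge_self abs_ge_zero abs_mult mult_left_mono order_trans)
lemma tbm: "\<bar>X\<bar> \<le> B \<Longrightarrow> - (e * X) \<le> \<bar>e\<bar> * (B::real)"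
  using tb[of X B "-e"] by simp

lemma sl: "x \<in> set xs \<Longrightarrow> \<forall>y\<in>set xs. 0 \<le> y \<Longrightarrow> x \<le> sum_list (xs::real list)"
proof (induction xs)
  case (Cons a xs)
  then show ?case using sum_list_nonneg[of xs] by auto
qed simp

lemma pos_part_lip: "\<bar>pos_part a - pos_part b\<bar> \<le> \<bar>a - b\<bar>"
  unfolding pos_part_def by auto

theorem lemma4:
  fixes f :: "real^'n \<Rightarrow> real^'n"
    and g :: "real^'n \<Rightarrow> real^'p \<Rightarrow> real^'n"
    and \<Phi> :: "real^'n \<Rightarrow> real^'p^'n"
    and G :: "real^'n \<Rightarrow> real^'l^'n"
    and h :: "real^'n \<Rightarrow> real \<Rightarrow> real"
    and \<phi> :: "real^'n \<Rightarrow> real \<Rightarrow> real^'p"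
    and \<alpha> :: "real^'n \<Rightarrow> real \<Rightarrow> real^'l"
    and gt :: "real^'n \<Rightarrow> real \<Rightarrow> real^'p \<Rightarrow> real"
    and \<Theta> :: "(real^'p) set"
    and a b c \<Gamma> \<epsilon> :: real
    and kap lam :: "real \<Rightarrow> real"
    and \<sigma> k V \<eta> :: "real^'n \<Rightarrow> real \<Rightarrow> real"
    and \<mu> :: "real^'n \<Rightarrow> real"
  assumes sm_f: "smooth f"
    and sm_g: "\<forall>\<theta>\<in>\<Theta>. smooth (\<lambda>x. g x \<theta>)"
    and sm_Phi: "smooth \<Phi>"
    and sm_G: "smooth G"
    and sm_h: "smooth (\<lambda>(x, y). h x y)"
    and sm_phi: "smooth (\<lambda>(x, y). \<phi> x y)"
    and sm_alpha: "smooth (\<lambda>(x, y). \<alpha> x y)"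
    and sm_gt: "\<forall>\<theta>\<in>\<Theta>. smooth (\<lambda>(x, y). gt x y \<theta>)"
    and f0: "f 0 = 0" and Phi0: "\<Phi> 0 = 0" and h0: "h 0 0 = 0" and phi0: "\<phi> 0 0 = 0"
    and pos: "a > 0" "b > 0" "c > 0" "\<Gamma> > 0" "\<epsilon> > 0"
    and kappa: "K_inf kap" "smooth_on {0<..} kap"
    and lambda: "K_inf lam" "smooth_on {0<..} lam"
    and sm_sigma: "smooth (\<lambda>(x, z). \<sigma> x z)"
    and sm_k: "smooth (\<lambda>(x, z). k x z)"
    and sm_V: "smooth (\<lambda>(x, z). V x z)"
    and sm_eta: "smooth (\<lambda>(x, y). \<eta> x y)" and eta_pos: "\<forall>x y. \<eta> x y > 0"
    and sm_mu: "smooth \<mu>"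
    and V0: "\<forall>z. V 0 z = 0" and k0: "\<forall>z. k 0 z = 0"
    and Vpos: "\<forall>x z. x \<noteq> 0 \<longrightarrow> V x z > 0"
    and ha: "\<forall>x z. (norm x)\<^sup>2 \<le> \<sigma> x z * V x z"
    and hb: "\<forall>\<theta>\<in>\<Theta>. \<forall>d x z.
      frechet_derivative (\<lambda>x'. V x' z) (at x) (f x + k x z *\<^sub>R g x \<theta> + \<Phi> x *v \<theta> + G x *v d)
      + deriv (\<lambda>z'. V x z') z * (\<Gamma> * exp (- z) * pos_part (V x z - \<epsilon>))
      \<le> - c * V x z + a * (((norm d)\<^sup>2 + (pos_part (norm \<theta> - b - lam (exp z)))\<^sup>2) / (1 + kap (exp z)))"
    and hc: "\<forall>\<theta>\<in>\<Theta>. \<forall>x y. gt x y \<theta> \<ge> \<eta> x y"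
    and hd: "\<forall>\<theta>\<in>\<Theta>. \<forall>x. norm (g x \<theta>) \<le> \<mu> x * (1 + norm \<theta>)"
  shows "let Vb = (\<lambda>x y z. V x z + (1/2) * (y - k x z)\<^sup>2) in
    \<exists>\<sigma>b kb :: real^'n \<Rightarrow> real \<Rightarrow> real \<Rightarrow> real.
      smooth (\<lambda>(x, y, z). \<sigma>b x y z) \<and> smooth (\<lambda>(x, y, z). kb x y z) \<and>
      (\<forall>z. kb 0 0 z = 0) \<and>
      (\<forall>d. \<forall>\<theta>\<in>\<Theta>. \<forall>x y z.
        (norm x)\<^sup>2 + \<bar>y\<bar>\<^sup>2 \<le> \<sigma>b x y z * Vb x y z \<and>
        frechet_derivative (\<lambda>x'. Vb x' y z) (at x) (f x + y *\<^sub>R g x \<theta> + \<Phi> x *v \<theta> + G x *v d)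
        + deriv (\<lambda>z'. Vb x y z') z * (\<Gamma> * exp (- z) * pos_part (Vb x y z - \<epsilon>))
        + deriv (\<lambda>y'. Vb x y' z) y * (h x y + gt x y \<theta> * kb x y z + \<phi> x y \<bullet> \<theta> + \<alpha> x y \<bullet> d)
        \<le> - (c / 2) * Vb x y z
           + 2 * a * (((norm d)\<^sup>2 + (pos_part (norm \<theta> - b - lam (exp z)))\<^sup>2) / (1 + kap (exp z))))"
proof -
  define V2 :: "(real^'n) \<times> real \<Rightarrow> real" where "V2 = (\<lambda>(x, z). V x z)"
  define K2 :: "(real^'n) \<times> real \<Rightarrow> real" where "K2 = (\<lambda>(x, z). k x z)"
  have sV2: "smooth V2" using sm_V by (simp add: V2_def)
  have sK2: "smooth K2" using sm_k by (simp add: K2_def)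
  have V2e[simp]: "V2 (x,z) = V x z" for x z by (simp add: V2_def)
  have K2e[simp]: "K2 (x,z) = k x z" for x z by (simp add: K2_def)
  have Vnn: "0 \<le> V x z" for x z using V0 Vpos by (cases "x = 0") (auto intro: less_imp_le)
  define Vx where "Vx x z = (\<lambda>w. frechet_derivative V2 (at (x,z)) (w,0))" for x z
  define Vz where "Vz x z = frechet_derivative V2 (at (x,z)) (0,1)" for x z
  define kx where "kx x z = (\<lambda>w. frechet_derivative K2 (at (x,z)) (w,0))" for x z
  define kz where "kz x z = frechet_derivative K2 (at (x,z)) (0,1)" for x z
  have dVx: "((\<lambda>x'. V x' z) has_derivative Vx x z) (at x)" for x z
    using partial_fst[OF sV2, where x=x and z=z] by (simp add: Vx_def)
  have dkx: "((\<lambda>x'. k x' z) has_derivative kx x z) (at x)" for x z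
    using partial_fst[OF sK2, where x=x and z=z] by (simp add: kx_def)
  have dVz: "((\<lambda>z'. V x z') has_real_derivative Vz x z) (at z)" for x z
    using partial_snd_real[OF sV2, where x=x and z=z] by (simp add: Vz_def)
  have dkz: "((\<lambda>z'. k x z') has_real_derivative kz x z) (at z)" for x z
    using partial_snd_real[OF sK2, where x=x and z=z] by (simp add: kz_def)
  have linVx: "linear (Vx x z)" for x z by (rule has_derivative_linear[OF dVx])
  have linkx: "linear (kx x z)" for x z by (rule has_derivative_linear[OF dkx])
  have Vx0: "Vx 0 z w = 0" for z w
  proof -
    have "frechet_derivative V2 (at (0,z)) = (\<lambda>h. 0)"
    proof (rule has_derivative_local_min[OF smooth_hasd[OF sV2]])
      show "\<forall>\<^sub>F q in at (0, z). V2 (0, z) \<le> V2 q"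
        by (rule always_eventually) (auto simp: V2_def Vnn V0 split: prod.splits)
    qed
    then show ?thesis by (simp add: Vx_def)
  qed
  define CC where "CC = real CARD('n) * real CARD('p) + real CARD('n) * real CARD('l)"
  have CC0: "0 \<le> CC" unfolding CC_def by simp
  have mvP: "norm (A *v v) \<le> (CC * norm A) * norm v" for A :: "real^'p^'n" and v
  proof -
    have "norm (A *v v) \<le> (real CARD('n) * real CARD('p) * norm A) * norm v" by (rule norm_mv)
    also have "\<dots> \<le> (CC * norm A) * norm v" unfolding CC_def
      by (intro mult_right_mono) (auto simp: algebra_simps)
    finally show ?thesis .
  qed
  have mvG: "norm (A *v v) \<le> (CC * norm A) * norm v" for A :: "real^'l^'n" and v
  proof -
    have "norm (A *v v) \<le> (real CARD('n) * real CARD('l) * norm A) * norm v" by (rule norm_mv)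
    also have "\<dots> \<le> (CC * norm A) * norm v" unfolding CC_def
      by (intro mult_right_mono) (auto simp: algebra_simps)
    finally show ?thesis .
  qed
  define BND where "BND B x y z \<longleftrightarrow>
       \<bar>Vz x z * (\<Gamma> * exp (- z))\<bar> \<le> B
     \<and> (\<forall>w. \<bar>Vx x z w\<bar> \<le> B * (norm x * norm w))
     \<and> (\<forall>w. \<bar>kx x z w\<bar> \<le> B * norm w)
     \<and> norm (f x) \<le> B * norm x
     \<and> (\<forall>\<theta>. norm (\<Phi> x *v \<theta>) \<le> B * (norm x * norm \<theta>))
     \<and> (\<forall>d. norm (G x *v d) \<le> B * norm d)
     \<and> \<bar>kz x z * (\<Gamma> * exp (- z))\<bar> \<le> B
     \<and> \<bar>h x y\<bar> \<le> B * (norm x + \<bar>y\<bar>)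
     \<and> norm (\<phi> x y) \<le> B * (norm x + \<bar>y\<bar>)
     \<and> norm (\<alpha> x y) \<le> B
     \<and> \<bar>\<mu> x\<bar> \<le> B
     \<and> \<bar>b + lam (exp z)\<bar> \<le> B
     \<and> \<bar>1 + kap (exp z)\<bar> \<le> B
     \<and> \<bar>\<sigma> x z\<bar> \<le> B
     \<and> \<bar>V x z\<bar> \<le> B
     \<and> \<bar>k x z\<bar> \<le> B * norm x
     \<and> 1 \<le> B" for B x y z
  have mh: "X \<le> B1 * w \<Longrightarrow> 0 \<le> w \<Longrightarrow> \<bar>B1\<bar> \<le> B \<Longrightarrow> X \<le> B * w" for X B1 w B :: real
    by (meson abs_ge_self mult_right_mono order_trans)
  have mh0: "X \<le> B1 \<Longrightarrow> \<bar>B1\<bar> \<le> B \<Longrightarrow> X \<le> B" for X B1 B :: real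
    by linarith
  have bnd_ex: "\<exists>B. \<forall>x y z. norm (x,(y::real,z::real)) \<le> R \<longrightarrow> BND B x y z" for R
  proof -
    have cVz: "continuous_on UNIV (\<lambda>q. frechet_derivative V2 (at q) (0,1) * (\<Gamma> * exp (- snd q)))"
      by (intro continuous_intros smooth_cont_on smooth_D sV2)
    obtain B1 where B1: "\<forall>x y z. norm (x,(y::real,z::real)) \<le> R \<longrightarrow> \<bar>Vz x z * (\<Gamma> * exp (- z))\<bar> \<le> B1"
      using bnd_cont_xz[OF cVz, of R] by (auto simp: Vz_def)
    have "\<forall>b\<in>Basis. \<exists>B. \<forall>x y z. norm (x,(y::real,z::real)) \<le> R \<longrightarrow> \<bar>Vx x z b\<bar> \<le> B * norm x"
    proof
      fix b :: "real^'n" assume "b \<in> Basis"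
      have "smooth (\<lambda>q. frechet_derivative V2 (at q) (b,0))" by (rule smooth_D[OF sV2])
      from bnd_lip_xz0[OF this, of R] Vx0 show "\<exists>B. \<forall>x y z. norm (x,(y::real,z::real)) \<le> R \<longrightarrow> \<bar>Vx x z b\<bar> \<le> B * norm x"
        by (auto simp: Vx_def)
    qed
    then obtain Bb where Bb: "\<forall>b\<in>Basis. \<forall>x y z. norm (x,(y::real,z::real)) \<le> R \<longrightarrow> \<bar>Vx x z b\<bar> \<le> Bb b * norm x"
      by metis
    define B2 where "B2 = (\<Sum>b\<in>(Basis::(real^'n) set). \<bar>Bb b\<bar>)"
    have B2: "\<forall>x y z. norm (x,(y::real,z::real)) \<le> R \<longrightarrow> (\<forall>w. \<bar>Vx x z w\<bar> \<le> B2 * (norm x * norm w))"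
    proof (intro allI impI)
      fix x :: "real^'n" and y z :: real and w :: "real^'n" assume xr: "norm (x,(y,z)) \<le> R"
      have "\<bar>Vx x z w\<bar> \<le> norm w * (\<Sum>b\<in>Basis. norm (Vx x z b))"
        using lin_bound[OF linVx] by (metis real_norm_def)
      also have "\<dots> \<le> norm w * (\<Sum>b\<in>Basis. \<bar>Bb b\<bar> * norm x)"
      proof (intro mult_left_mono sum_mono)
        fix b :: "real^'n" assume "b \<in> Basis"
        then have "\<bar>Vx x z b\<bar> \<le> Bb b * norm x" using Bb xr by blast
        then show "norm (Vx x z b) \<le> \<bar>Bb b\<bar> * norm x" using mh[of "\<bar>Vx x z b\<bar>" "Bb b" "norm x" "\<bar>Bb b\<bar>"] by simp
      qed simp
      finally show "\<bar>Vx x z w\<bar> \<le> B2 * (norm x * norm w)"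
        by (simp add: B2_def sum_distrib_left[symmetric] algebra_simps)
    qed
    have ckx: "continuous_on UNIV (\<lambda>q. \<Sum>b\<in>(Basis::(real^'n) set). \<bar>frechet_derivative K2 (at q) (b,0)\<bar>)"
      by (intro continuous_intros smooth_cont_on smooth_D sK2)
    obtain B3' where B3': "\<forall>x y z. norm (x,(y::real,z::real)) \<le> R \<longrightarrow> \<bar>\<Sum>b\<in>(Basis::(real^'n) set). \<bar>kx x z b\<bar>\<bar> \<le> B3'"
      using bnd_cont_xz[OF ckx, of R] by (auto simp: kx_def)
    have B3: "\<forall>x y z. norm (x,(y::real,z::real)) \<le> R \<longrightarrow> (\<forall>w. \<bar>kx x z w\<bar> \<le> B3' * norm w)"
    proof (intro allI impI)
      fix x :: "real^'n" and y z :: real and w :: "real^'n" assume xr: "norm (x,(y,z)) \<le> R"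
      have "\<bar>kx x z w\<bar> \<le> norm w * (\<Sum>b\<in>Basis. norm (kx x z b))"
        using lin_bound[OF linkx] by (metis real_norm_def)
      also have "\<dots> \<le> norm w * B3'" using B3'[rule_format, OF xr] by (intro mult_left_mono) auto
      finally show "\<bar>kx x z w\<bar> \<le> B3' * norm w" by (simp add: mult.commute)
    qed
    obtain B4 where B4: "\<forall>x y z. norm (x,(y::real,z::real)) \<le> R \<longrightarrow> norm (f x) \<le> B4 * norm x"
      using bnd_lip_x0[OF sm_f f0, of R] by blast
    obtain B5' where B5': "\<forall>x y z. norm (x,(y::real,z::real)) \<le> R \<longrightarrow> norm (\<Phi> x) \<le> B5' * norm x"
      using bnd_lip_x0[OF sm_Phi Phi0, of R] by blast
    have B5: "\<forall>x y z. norm (x,(y::real,z::real)) \<le> R \<longrightarrow> (\<forall>\<theta>. norm (\<Phi> x *v \<theta>) \<le> (CC * \<bar>B5'\<bar>) * (norm x * norm \<theta>))"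
    proof (intro allI impI)
      fix x :: "real^'n" and y z :: real and \<theta> :: "real^'p" assume xr: "norm (x,(y,z)) \<le> R"
      have "norm (\<Phi> x *v \<theta>) \<le> (CC * norm (\<Phi> x)) * norm \<theta>" by (rule mvP)
      also have "\<dots> \<le> (CC * (\<bar>B5'\<bar> * norm x)) * norm \<theta>"
        using B5'[rule_format, OF xr] CC0 by (intro mult_right_mono mult_left_mono mh[OF _ _ order_refl]) auto
      finally show "norm (\<Phi> x *v \<theta>) \<le> (CC * \<bar>B5'\<bar>) * (norm x * norm \<theta>)" by (simp add: algebra_simps)
    qed
    obtain B6' where B6': "\<forall>x y z. norm (x,(y::real,z::real)) \<le> R \<longrightarrow> norm (G x) \<le> B6'"
      using bnd_cont_x[OF smooth_cont_on[OF sm_G], of R] by blast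
    have B6: "\<forall>x y z. norm (x,(y::real,z::real)) \<le> R \<longrightarrow> (\<forall>d. norm (G x *v d) \<le> (CC * B6') * norm d)"
    proof (intro allI impI)
      fix x :: "real^'n" and y z :: real and d :: "real^'l" assume xr: "norm (x,(y,z)) \<le> R"
      have "norm (G x *v d) \<le> (CC * norm (G x)) * norm d" by (rule mvG)
      also have "\<dots> \<le> (CC * B6') * norm d"
        using B6'[rule_format, OF xr] CC0 by (intro mult_right_mono mult_left_mono) auto
      finally show "norm (G x *v d) \<le> (CC * B6') * norm d" .
    qed
    have ckz: "continuous_on UNIV (\<lambda>q. frechet_derivative K2 (at q) (0,1) * (\<Gamma> * exp (- snd q)))"
      by (intro continuous_intros smooth_cont_on smooth_D sK2)
    obtain B7 where B7: "\<forall>x y z. norm (x,(y::real,z::real)) \<le> R \<longrightarrow> \<bar>kz x z * (\<Gamma> * exp (- z))\<bar> \<le> B7"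
      using bnd_cont_xz[OF ckz, of R] by (auto simp: kz_def)
    have H2: "smooth (\<lambda>(x, y). h x y)" by (rule sm_h)
    obtain B8 where B8: "\<forall>x y z. norm (x,(y::real,z::real)) \<le> R \<longrightarrow> \<bar>h x y\<bar> \<le> B8 * (norm x + \<bar>y\<bar>)"
      using bnd_lip_xy0[OF sm_h, of R] h0 by auto
    obtain B9 where B9: "\<forall>x y z. norm (x,(y::real,z::real)) \<le> R \<longrightarrow> norm (\<phi> x y) \<le> B9 * (norm x + \<bar>y\<bar>)"
      using bnd_lip_xy0[OF sm_phi, of R] phi0 by auto
    obtain B10 where B10: "\<forall>x y z. norm (x,(y::real,z::real)) \<le> R \<longrightarrow> norm (\<alpha> x y) \<le> B10"
      using bnd_cont_xy[OF smooth_cont_on[OF sm_alpha], of R] by auto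
    obtain B11 where B11: "\<forall>x y z. norm (x,(y::real,z::real)) \<le> R \<longrightarrow> \<bar>\<mu> x\<bar> \<le> B11"
      using bnd_cont_x[OF smooth_cont_on[OF sm_mu], of R] by auto
    have ce: "continuous_on UNIV (exp :: real \<Rightarrow> real)" by (rule continuous_on_exp[OF continuous_on_id])
    have ce2: "exp ` UNIV \<subseteq> {0::real..}" by auto
    have lamc: "continuous_on {0..} lam" using lambda(1) unfolding K_inf_def by blast
    have kapc: "continuous_on {0..} kap" using kappa(1) unfolding K_inf_def by blast
    have clam: "continuous_on UNIV (\<lambda>z. b + lam (exp z))"
      by (rule continuous_on_add[OF continuous_on_const continuous_on_compose2[OF lamc ce ce2]])
    have ckap: "continuous_on UNIV (\<lambda>z. 1 + kap (exp z))"
      by (rule continuous_on_add[OF continuous_on_const continuous_on_compose2[OF kapc ce ce2]])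
    obtain B12 where B12: "\<forall>x::real^'n. \<forall>y z. norm (x,(y::real,z::real)) \<le> R \<longrightarrow> \<bar>b + lam (exp z)\<bar> \<le> B12"
      using bnd_cont_z[OF clam, of R] by blast
    obtain B13 where B13: "\<forall>x::real^'n. \<forall>y z. norm (x,(y::real,z::real)) \<le> R \<longrightarrow> \<bar>1 + kap (exp z)\<bar> \<le> B13"
      using bnd_cont_z[OF ckap, of R] by blast
    obtain B14 where B14: "\<forall>x y z. norm (x,(y::real,z::real)) \<le> R \<longrightarrow> \<bar>\<sigma> x z\<bar> \<le> B14"
      using bnd_cont_xz[OF smooth_cont_on[OF sm_sigma], of R] by auto
    obtain B15 where B15: "\<forall>x y z. norm (x,(y::real,z::real)) \<le> R \<longrightarrow> \<bar>V x z\<bar> \<le> B15"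
      using bnd_cont_xz[OF smooth_cont_on[OF sm_V], of R] by auto
    obtain B16 where B16: "\<forall>x y z. norm (x,(y::real,z::real)) \<le> R \<longrightarrow> \<bar>k x z\<bar> \<le> B16 * norm x"
      using bnd_lip_xz0[OF sK2, of R] k0 by auto
    define Bl where "Bl = [\<bar>B1\<bar>, \<bar>B2\<bar>, \<bar>B3'\<bar>, \<bar>B4\<bar>, \<bar>CC * \<bar>B5'\<bar>\<bar>, \<bar>CC * B6'\<bar>, \<bar>B7\<bar>, \<bar>B8\<bar>,
       \<bar>B9\<bar>, \<bar>B10\<bar>, \<bar>B11\<bar>, \<bar>B12\<bar>, \<bar>B13\<bar>, \<bar>B14\<bar>, \<bar>B15\<bar>, \<bar>B16\<bar>]"
    define B where "B = 1 + sum_list Bl"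
    have Blnn: "\<forall>v\<in>set Bl. 0 \<le> v" unfolding Bl_def by simp
    have Bl_le: "v \<in> set Bl \<Longrightarrow> v \<le> B" for v
      using sl[of v Bl] Blnn unfolding B_def by simp
    have Bge: "\<bar>B1\<bar> \<le> B" "\<bar>B2\<bar> \<le> B" "\<bar>B3'\<bar> \<le> B" "\<bar>B4\<bar> \<le> B" "\<bar>CC * \<bar>B5'\<bar>\<bar> \<le> B" "\<bar>CC * B6'\<bar> \<le> B"
      "\<bar>B7\<bar> \<le> B" "\<bar>B8\<bar> \<le> B" "\<bar>B9\<bar> \<le> B" "\<bar>B10\<bar> \<le> B" "\<bar>B11\<bar> \<le> B" "\<bar>B12\<bar> \<le> B"
      "\<bar>B13\<bar> \<le> B" "\<bar>B14\<bar> \<le> B" "\<bar>B15\<bar> \<le> B" "\<bar>B16\<bar> \<le> B"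
      by (rule Bl_le, simp add: Bl_def)+
    have B1le: "1 \<le> B" unfolding B_def using sum_list_nonneg[of Bl] Blnn by simp
    show ?thesis
    proof (intro exI[of _ B] allI impI)
      fix x :: "real^'n" and y z :: real assume xr: "norm (x,(y,z)) \<le> R"
      note r = B1[rule_format, OF xr] B2[rule_format, OF xr] B3[rule_format, OF xr] B4[rule_format, OF xr]
          B5[rule_format, OF xr] B6[rule_format, OF xr] B7[rule_format, OF xr] B8[rule_format, OF xr]
          B9[rule_format, OF xr] B10[rule_format, OF xr] B11[rule_format, OF xr] B12[rule_format, OF xr]
          B13[rule_format, OF xr] B14[rule_format, OF xr] B15[rule_format, OF xr] B16[rule_format, OF xr]
      show "BND B x y z" unfolding BND_def
        apply (intro conjI allI)
        apply (rule mh0[OF r(1) Bge(1)])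
        apply (rule mh[OF r(2) _ Bge(2)], simp)
        apply (rule mh[OF r(3) _ Bge(3)], simp)
        apply (rule mh[OF r(4) _ Bge(4)], simp)
        apply (rule mh[OF r(5) _ Bge(5)], simp)
        apply (rule mh[OF r(6) _ Bge(6)], simp)
        apply (rule mh0[OF r(7) Bge(7)])
        apply (rule mh[OF r(8) _ Bge(8)], simp)
        apply (rule mh[OF r(9) _ Bge(9)], simp)
        apply (rule mh0[OF r(10) Bge(10)])
        apply (rule mh0[OF r(11) Bge(11)])
        apply (rule mh0[OF r(12) Bge(12)])
        apply (rule mh0[OF r(13) Bge(13)])
        apply (rule mh0[OF r(14) Bge(14)])
        apply (rule mh0[OF r(15) Bge(15)])
        apply (rule mh[OF r(16) _ Bge(16)], simp)
        apply (rule B1le)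
        done
    qed
  qed
  obtain Bf where Bf: "\<And>R. \<forall>x y z. norm (x,(y::real,z::real)) \<le> R \<longrightarrow> BND (Bf R) x y z"
    using bnd_ex by metis
  define Lf where "Lf p = Bf (real (nat \<lceil>norm p\<rceil>))" for p :: "(real^'n) \<times> real \<times> real"
  have BL: "BND (Lf (x,y,z)) x y z" for x y z
  proof -
    have "norm (x,(y,z)) \<le> real (nat \<lceil>norm (x,(y,z))\<rceil>)" by linarith
    then show ?thesis using Bf unfolding Lf_def by blast
  qed
  have L1: "1 \<le> Lf (x,y,z)" for x y z using BL[of x y z] unfolding BND_def by blast
  define SL where "SL R = (\<Sum>j\<le>nat \<lceil>R\<rceil>. \<bar>Bf (real j)\<bar>)" for R :: real
  have Lf_loc: "Lf p \<le> SL R" if "norm p \<le> R" for p R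
  proof -
    have "nat \<lceil>norm p\<rceil> \<le> nat \<lceil>R\<rceil>" using that by (intro nat_mono ceiling_mono)
    then have "\<bar>Bf (real (nat \<lceil>norm p\<rceil>))\<bar> \<le> SL R" unfolding SL_def by (intro member_le_sum) auto
    then show ?thesis unfolding Lf_def by linarith
  qed
  have apos: "0 < a" and cpos: "0 < c" using pos by auto
  define Q where "Q p = Qf a c (Lf p) \<bar>fst (snd p) - k (fst p) (snd (snd p))\<bar> (V (fst p) (snd (snd p))) (norm (fst p)) \<bar>fst (snd p)\<bar>"
    for p :: "(real^'n) \<times> real \<times> real"
  have Q_loc: "\<forall>R. \<exists>B. \<forall>p. norm p \<le> R \<longrightarrow> Q p \<le> B"
  proof
    fix R
    show "\<exists>B. \<forall>p. norm p \<le> R \<longrightarrow> Q p \<le> B"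
    proof (intro exI[of _ "Qf a c (SL R) (R + SL R * R) (SL R) R R"] allI impI)
      fix p :: "(real^'n) \<times> real \<times> real" assume pr: "norm p \<le> R"
      obtain x y z where p: "p = (x,(y,z))" by (metis prod.collapse)
      have B: "BND (Lf p) x y z" using BL p by simp
      have L1': "1 \<le> Lf p" using L1 p by simp
      have LS: "Lf p \<le> SL R" using Lf_loc[OF pr] .
      have xr: "norm x \<le> R" using pr norm_x3[of x y z] p by simp
      have yr: "\<bar>y\<bar> \<le> R" using pr norm_y3[of y x z] p by simp
      have kb: "\<bar>k x z\<bar> \<le> Lf p * norm x" using B unfolding BND_def by blast
      have Vb: "\<bar>V x z\<bar> \<le> Lf p" using B unfolding BND_def by blast
      have "Lf p * norm x \<le> SL R * R" using LS xr L1' by (intro mult_mono) auto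
      then have er: "\<bar>y - k x z\<bar> \<le> R + SL R * R" using kb yr by linarith
      show "Q p \<le> Qf a c (SL R) (R + SL R * R) (SL R) R R"
      proof -
        have VS: "V x z \<le> SL R" using Vb LS by linarith
        have L0: "0 \<le> Lf p" using L1' by linarith
        have "Qf a c (Lf p) \<bar>y - k x z\<bar> (V x z) (norm x) \<bar>y\<bar> \<le> Qf a c (SL R) (R + SL R * R) (SL R) R R"
          by (rule Qf_mono[OF apos cpos L0 LS abs_ge_zero er Vnn VS norm_ge_zero xr abs_ge_zero yr])
        then show ?thesis unfolding Q_def p by simp
      qed
    qed
  qed
  obtain M where sM: "smooth M" and QM: "\<And>p. Q p \<le> M p" using majorant[OF Q_loc] by blast
  define Q2 where "Q2 p = 4 + 2 * (Lf p)^3 + Lf p" for p :: "(real^'n) \<times> real \<times> real"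
  have Q2_loc: "\<forall>R. \<exists>B. \<forall>p. norm p \<le> R \<longrightarrow> Q2 p \<le> B"
  proof
    fix R
    show "\<exists>B. \<forall>p. norm p \<le> R \<longrightarrow> Q2 p \<le> B"
    proof (intro exI[of _ "4 + 2 * (SL R)^3 + SL R"] allI impI)
      fix p :: "(real^'n) \<times> real \<times> real" assume pr: "norm p \<le> R"
      obtain x y z where p: "p = (x,(y,z))" by (metis prod.collapse)
      have L1': "1 \<le> Lf p" using L1 p by simp
      have LS: "Lf p \<le> SL R" using Lf_loc[OF pr] .
      have "(Lf p)^3 \<le> (SL R)^3" using L1' LS by (intro power_mono) auto
      then show "Q2 p \<le> 4 + 2 * (SL R)^3 + SL R" unfolding Q2_def using LS by linarith
    qed
  qed
  obtain M2 where sM2: "smooth M2" and QM2: "\<And>p. Q2 p \<le> M2 p" using majorant[OF Q2_loc] by blast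
  define E2 :: "(real^'n) \<times> real \<Rightarrow> real" where "E2 = (\<lambda>(x, y). \<eta> x y)"
  have sE2: "smooth E2" using sm_eta by (simp add: E2_def)
  define kb where "kb x y z = - (y - k x z) * M (x,(y,z)) * inverse (\<eta> x y)" for x y z
  define sb where "sb x y z = M2 (x,(y,z))" for x y z
  have smooth_sb: "smooth (\<lambda>(x, y, z). sb x y z)"
  proof -
    have "(\<lambda>(x, y, z). sb x y z) = M2" by (auto simp: sb_def fun_eq_iff)
    then show ?thesis using sM2 by simp
  qed
  have smooth_kb: "smooth (\<lambda>(x, y, z). kb x y z)"
  proof -
    have eq: "(\<lambda>(x, y, z). kb x y z) = (\<lambda>p. - (fst (snd p) - K2 (fst p, snd (snd p))) * M p * inverse (E2 (fst p, fst (snd p))))"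
      by (auto simp: kb_def E2_def fun_eq_iff)
    have s1: "smooth (\<lambda>p::(real^'n) \<times> real \<times> real. fst (snd p))"
      by (rule smooth_linear) (intro bounded_linear_compose[OF bounded_linear_fst bounded_linear_snd])
    have s2: "smooth (\<lambda>p::(real^'n) \<times> real \<times> real. K2 (fst p, snd (snd p)))"
      by (rule smooth_comp_linear[OF sK2 bounded_linear_xz])
    have s3: "smooth (\<lambda>p::(real^'n) \<times> real \<times> real. E2 (fst p, fst (snd p)))"
      by (rule smooth_comp_linear[OF sE2 bounded_linear_xy])
    have s4: "smooth (\<lambda>p::(real^'n) \<times> real \<times> real. inverse (E2 (fst p, fst (snd p))))"
    proof (rule smooth_inverse[OF s3], rule allI)
      fix p :: "(real^'n) \<times> real \<times> real"
      show "E2 (fst p, fst (snd p)) \<noteq> 0" using eta_pos[rule_format, of "fst p" "fst (snd p)"] by (simp add: E2_def)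
    qed
    show ?thesis unfolding eq
      by (intro smooth_mult smooth_minus smooth_diff' s1 s2 sM s4)
  qed
  have kb0: "\<forall>z. kb 0 0 z = 0" using k0 by (simp add: kb_def)
  have main: "(norm x)\<^sup>2 + \<bar>y\<bar>\<^sup>2 \<le> sb x y z * (V x z + (1/2) * (y - k x z)\<^sup>2) \<and>
      frechet_derivative (\<lambda>x'. V x' z + (1/2) * (y - k x' z)\<^sup>2) (at x) (f x + y *\<^sub>R g x \<theta> + \<Phi> x *v \<theta> + G x *v d)
      + deriv (\<lambda>z'. V x z' + (1/2) * (y - k x z')\<^sup>2) z * (\<Gamma> * exp (- z) * pos_part (V x z + (1/2) * (y - k x z)\<^sup>2 - \<epsilon>))
      + deriv (\<lambda>y'. V x z + (1/2) * (y' - k x z)\<^sup>2) y * (h x y + gt x y \<theta> * kb x y z + \<phi> x y \<bullet> \<theta> + \<alpha> x y \<bullet> d)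
      \<le> - (c / 2) * (V x z + (1/2) * (y - k x z)\<^sup>2)
         + 2 * a * (((norm d)\<^sup>2 + (pos_part (norm \<theta> - b - lam (exp z)))\<^sup>2) / (1 + kap (exp z)))"
    if th: "\<theta> \<in> \<Theta>" for d \<theta> x y z
  proof -
    define L where "L = Lf (x,(y,z))"
    define e where "e = y - k x z"
    define E where "E = \<bar>e\<bar>"
    define u where "u = norm x"
    define Y where "Y = \<bar>y\<bar>"
    define t where "t = norm \<theta>"
    define s where "s = pos_part (norm \<theta> - b - lam (exp z))"
    define dn where "dn = norm d"
    define \<kappa>1 where "\<kappa>1 = 1 + kap (exp z)"
    define \<Gamma>e where "\<Gamma>e = \<Gamma> * exp (- z)"
    define P0 where "P0 = pos_part (V x z - \<epsilon>)"
    define P where "P = pos_part (V x z + (1/2) * e\<^sup>2 - \<epsilon>)"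
    define W where "W = a * ((dn\<^sup>2 + s\<^sup>2) / \<kappa>1)"
    define F0 where "F0 = f x + k x z *\<^sub>R g x \<theta> + \<Phi> x *v \<theta> + G x *v d"
    define F where "F = f x + y *\<^sub>R g x \<theta> + \<Phi> x *v \<theta> + G x *v d"
    have B: "BND L x y z" unfolding L_def by (rule BL)
    note BB = B[unfolded BND_def]
    have bVz: "\<bar>Vz x z * \<Gamma>e\<bar> \<le> L" using BB by (simp add: \<Gamma>e_def)
    have bVx: "\<And>w. \<bar>Vx x z w\<bar> \<le> L * (u * norm w)" using BB by (simp add: u_def)
    have bkx: "\<And>w. \<bar>kx x z w\<bar> \<le> L * norm w" using BB by simp
    have bf: "norm (f x) \<le> L * u" using BB by (simp add: u_def)
    have bPhi: "norm (\<Phi> x *v \<theta>) \<le> L * (u * t)" using BB by (simp add: u_def t_def)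
    have bG: "norm (G x *v d) \<le> L * dn" using BB by (simp add: dn_def)
    have bkz: "\<bar>kz x z * \<Gamma>e\<bar> \<le> L" using BB by (simp add: \<Gamma>e_def)
    have bh: "\<bar>h x y\<bar> \<le> L * (u + Y)" using BB by (simp add: u_def Y_def)
    have bphi: "norm (\<phi> x y) \<le> L * (u + Y)" using BB by (simp add: u_def Y_def)
    have balpha: "norm (\<alpha> x y) \<le> L" using BB by simp
    have bmu: "\<bar>\<mu> x\<bar> \<le> L" using BB by simp
    have blam: "\<bar>b + lam (exp z)\<bar> \<le> L" using BB by simp
    have bkap: "\<bar>\<kappa>1\<bar> \<le> L" using BB by (simp add: \<kappa>1_def)
    have bsig: "\<bar>\<sigma> x z\<bar> \<le> L" using BB by simp
    have bk: "\<bar>k x z\<bar> \<le> L * u" using BB by (simp add: u_def)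
    have L1: "1 \<le> L" using BB by simp
    have L0: "0 < L" using L1 by simp
    have u0: "0 \<le> u" and Y0: "0 \<le> Y" and t0: "0 \<le> t" and dn0: "0 \<le> dn" and E0: "0 \<le> E"
      by (auto simp: u_def Y_def t_def dn_def E_def)
    have s0: "0 \<le> s" by (simp add: s_def pos_part_def)
    have V0': "0 \<le> V x z" by (rule Vnn)
    have Ee: "E\<^sup>2 = e\<^sup>2" by (simp add: E_def)
    have kap0: "0 \<le> kap (exp z)" using kappa(1) unfolding K_inf_def by auto
    have k1pos: "0 < \<kappa>1" using kap0 by (simp add: \<kappa>1_def)
    have k1L: "\<kappa>1 \<le> L" using bkap by linarith
    have Gpos: "0 < \<Gamma>e" using pos by (simp add: \<Gamma>e_def)
    have fdV: "frechet_derivative (\<lambda>x'. V x' z) (at x) = Vx x z" using frechet_derivative_at[OF dVx] by simp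
    have dV: "deriv (\<lambda>z'. V x z') z = Vz x z" by (rule DERIV_imp_deriv[OF dVz])
    have hb': "Vx x z F0 + Vz x z * (\<Gamma>e * P0) \<le> - c * V x z + W"
      using bspec[OF hb th, rule_format, where d=d and x=x and z=z] unfolding fdV dV
      by (simp add: F0_def \<Gamma>e_def P0_def W_def s_def dn_def \<kappa>1_def mult.assoc)
    have DX: "frechet_derivative (\<lambda>x'. V x' z + (1/2) * (y - k x' z)\<^sup>2) (at x) = (\<lambda>w. Vx x z w - e * kx x z w)"
    proof -
      have h1: "((\<lambda>x'. y - k x' z) has_derivative (\<lambda>w. 0 - kx x z w)) (at x)"
        by (rule has_derivative_diff[OF has_derivative_const dkx])
      have h2: "((\<lambda>x'. (y - k x' z)^2) has_derivative (\<lambda>w. of_nat 2 * (0 - kx x z w) * (y - k x z)^(2-1))) (at x)"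
        by (rule has_derivative_power[OF h1])
      have h3: "((\<lambda>x'. (1/2) * (y - k x' z)^2) has_derivative (\<lambda>w. (1/2) * (of_nat 2 * (0 - kx x z w) * (y - k x z)^(2-1)))) (at x)"
        by (rule has_derivative_mult_right[OF h2])
      have h4: "((\<lambda>x'. V x' z + (1/2) * (y - k x' z)^2) has_derivative (\<lambda>w. Vx x z w + (1/2) * (of_nat 2 * (0 - kx x z w) * (y - k x z)^(2-1)))) (at x)"
        by (rule has_derivative_add[OF dVx h3])
      have eq: "(\<lambda>w. Vx x z w + (1/2) * (of_nat 2 * (0 - kx x z w) * (y - k x z)^(2-1))) = (\<lambda>w. Vx x z w - e * kx x z w)"
        by (simp add: e_def fun_eq_iff algebra_simps)
      show ?thesis using frechet_derivative_at[OF h4] eq by simp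
    qed
    have DZ: "deriv (\<lambda>z'. V x z' + (1/2) * (y - k x z')\<^sup>2) z = Vz x z - e * kz x z"
    proof (rule DERIV_imp_deriv)
      have h1: "((\<lambda>z'. y - k x z') has_real_derivative (0 - kz x z)) (at z)"
        by (rule DERIV_diff[OF DERIV_const dkz])
      have h2: "((\<lambda>z'. (y - k x z')^2) has_real_derivative (of_nat 2 * ((0 - kz x z) * (y - k x z) ^ (2 - Suc 0)))) (at z)"
        by (rule DERIV_power[OF h1])
      have h3: "((\<lambda>z'. V x z' + (1/2) * (y - k x z')^2) has_real_derivative (Vz x z + (1/2) * (of_nat 2 * ((0 - kz x z) * (y - k x z) ^ (2 - Suc 0))))) (at z)"
        by (rule DERIV_add[OF dVz DERIV_cmult[OF h2]])
      then show "((\<lambda>z'. V x z' + (1/2) * (y - k x z')\<^sup>2) has_real_derivative (Vz x z - e * kz x z)) (at z)"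
        by (simp add: e_def algebra_simps)
    qed
    have DY: "deriv (\<lambda>y'. V x z + (1/2) * (y' - k x z)\<^sup>2) y = e"
    proof (rule DERIV_imp_deriv)
      have h1: "((\<lambda>y'. y' - k x z) has_real_derivative (1 - 0)) (at y)"
        by (rule DERIV_diff[OF DERIV_ident DERIV_const])
      have h2: "((\<lambda>y'. (y' - k x z)^2) has_real_derivative (of_nat 2 * ((1 - 0) * (y - k x z) ^ (2 - Suc 0)))) (at y)"
        by (rule DERIV_power[OF h1])
      have h3: "((\<lambda>y'. V x z + (1/2) * (y' - k x z)^2) has_real_derivative (0 + (1/2) * (of_nat 2 * ((1 - 0) * (y - k x z) ^ (2 - Suc 0))))) (at y)"
        by (rule DERIV_add[OF DERIV_const DERIV_cmult[OF h2]])
      have eq: "0 + (1/2) * (of_nat 2 * ((1 - 0) * (y - k x z) ^ (2 - Suc 0))) = e"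
        by (simp add: e_def)
      show "((\<lambda>y'. V x z + (1/2) * (y' - k x z)\<^sup>2) has_real_derivative e) (at y)"
        using h3 unfolding eq .
    qed
    have FF: "F = F0 + e *\<^sub>R g x \<theta>"
      by (simp add: F_def F0_def e_def algebra_simps scaleR_diff_left)
    have VxF: "Vx x z F = Vx x z F0 + e * Vx x z (g x \<theta>)"
      unfolding FF using linVx[of x z] by (simp add: linear_add linear_scale)
    have gb: "norm (g x \<theta>) \<le> L * (1 + t)"
    proof -
      have "norm (g x \<theta>) \<le> \<mu> x * (1 + t)" using hd th by (simp add: t_def)
      also have "\<dots> \<le> L * (1 + t)" using bmu t0 by (intro mult_right_mono) auto
      finally show ?thesis .
    qed
    have tL: "t \<le> L + s"
    proof -
      have "norm \<theta> - b - lam (exp z) \<le> s" unfolding s_def pos_part_def by simp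
      then show ?thesis using blam unfolding t_def by linarith
    qed
    have uV: "u\<^sup>2 \<le> L * V x z"
    proof -
      have "u\<^sup>2 \<le> \<sigma> x z * V x z" using ha by (simp add: u_def)
      also have "\<dots> \<le> L * V x z" using bsig V0' by (intro mult_right_mono) auto
      finally show ?thesis .
    qed
    have YE: "Y \<le> E + L * u"
    proof -
      have "y = e + k x z" by (simp add: e_def)
      then have "Y \<le> E + \<bar>k x z\<bar>" unfolding Y_def E_def by (metis abs_triangle_ineq)
      then show ?thesis using bk by linarith
    qed
    define T1 where "T1 = Vz x z * (\<Gamma>e * P) - Vz x z * (\<Gamma>e * P0)"
    define T2 where "T2 = e * Vx x z (g x \<theta>)"
    define T3 where "T3 = - (e * kx x z F)"
    define T4 where "T4 = - (e * (kz x z * (\<Gamma>e * P)))"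
    define T5 where "T5 = e * h x y"
    define T6 where "T6 = e * (\<phi> x y \<bullet> \<theta>)"
    define T7 where "T7 = e * (\<alpha> x y \<bullet> d)"
    define TK where "TK = e * (gt x y \<theta> * kb x y z)"
    have PP0: "\<bar>P - P0\<bar> \<le> E\<^sup>2 / 2"
    proof -
      have "\<bar>P - P0\<bar> \<le> \<bar>(V x z + (1/2) * e\<^sup>2 - \<epsilon>) - (V x z - \<epsilon>)\<bar>" unfolding P_def P0_def by (rule pos_part_lip)
      then show ?thesis using Ee by simp
    qed
    have P0': "0 \<le> P" unfolding P_def pos_part_def by simp
    have PV: "P \<le> V x z + E\<^sup>2 / 2"
      unfolding P_def pos_part_def using pos(5) V0' Ee by (simp add: max_def)
    have T1b: "T1 \<le> L * E\<^sup>2 / 2"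
    proof -
      have "T1 = (Vz x z * \<Gamma>e) * (P - P0)" by (simp add: T1_def algebra_simps)
      also have "\<dots> \<le> \<bar>Vz x z * \<Gamma>e\<bar> * \<bar>P - P0\<bar>" by (metis abs_ge_self abs_mult)
      also have "\<dots> \<le> L * (E\<^sup>2 / 2)" using bVz PP0 by (intro mult_mono) auto
      finally show ?thesis by simp
    qed
    have T2b: "T2 \<le> E * L\<^sup>2 * u * (1 + t)"
    proof -
      have "\<bar>Vx x z (g x \<theta>)\<bar> \<le> L * (u * (L * (1 + t)))"
      proof -
        have "\<bar>Vx x z (g x \<theta>)\<bar> \<le> L * (u * norm (g x \<theta>))" by (rule bVx)
        also have "\<dots> \<le> L * (u * (L * (1 + t)))" using gb u0 L0 by (intro mult_left_mono) auto
        finally show ?thesis .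
      qed
      then have "T2 \<le> E * (L * (u * (L * (1 + t))))" unfolding T2_def E_def by (rule tb)
      then show ?thesis by (simp add: algebra_simps power2_eq_square)
    qed
    have nF: "norm F \<le> L * u + Y * (L * (1 + t)) + L * (u * t) + L * dn"
    proof -
      have n1: "norm F \<le> norm (f x + y *\<^sub>R g x \<theta> + \<Phi> x *v \<theta>) + norm (G x *v d)"
        unfolding F_def by (rule norm_triangle_ineq)
      have n2: "norm (f x + y *\<^sub>R g x \<theta> + \<Phi> x *v \<theta>) \<le> norm (f x + y *\<^sub>R g x \<theta>) + norm (\<Phi> x *v \<theta>)"
        by (rule norm_triangle_ineq)
      have n3: "norm (f x + y *\<^sub>R g x \<theta>) \<le> norm (f x) + norm (y *\<^sub>R g x \<theta>)"
        by (rule norm_triangle_ineq)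
      have "norm F \<le> norm (f x) + norm (y *\<^sub>R g x \<theta>) + norm (\<Phi> x *v \<theta>) + norm (G x *v d)"
        using n1 n2 n3 by linarith
      moreover have "norm (y *\<^sub>R g x \<theta>) \<le> Y * (L * (1 + t))"
        using gb by (simp add: Y_def mult_left_mono)
      ultimately show ?thesis using bf bPhi bG by linarith
    qed
    have T3b: "T3 \<le> E * L * (L * u + Y * L * (1 + t) + L * u * t + L * dn)"
    proof -
      have "\<bar>kx x z F\<bar> \<le> L * (L * u + Y * (L * (1 + t)) + L * (u * t) + L * dn)"
        using order_trans[OF bkx[of F] mult_left_mono[OF nF less_imp_le[OF L0]]] .
      then have "T3 \<le> E * (L * (L * u + Y * (L * (1 + t)) + L * (u * t) + L * dn))" unfolding T3_def E_def by (rule tbm)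
      then show ?thesis by (simp add: algebra_simps)
    qed
    have T4b: "T4 \<le> E * L * (V x z + E\<^sup>2 / 2)"
    proof -
      have "\<bar>kz x z * (\<Gamma>e * P)\<bar> = \<bar>kz x z * \<Gamma>e\<bar> * P" using P0' by (simp add: abs_mult)
      also have "\<dots> \<le> L * (V x z + E\<^sup>2 / 2)" using bkz PV P0' by (intro mult_mono) auto
      finally have "T4 \<le> E * (L * (V x z + E\<^sup>2 / 2))" unfolding T4_def E_def by (rule tbm)
      then show ?thesis by (simp add: algebra_simps)
    qed
    have T5b: "T5 \<le> E * L * (u + Y)"
      using tb[OF bh, of e] unfolding T5_def E_def by (simp add: algebra_simps)
    have T6b: "T6 \<le> E * L * (u + Y) * t"
    proof -
      have "\<bar>\<phi> x y \<bullet> \<theta>\<bar> \<le> norm (\<phi> x y) * t" unfolding t_def by (rule Cauchy_Schwarz_ineq2)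
      also have "\<dots> \<le> L * (u + Y) * t" using bphi t0 by (intro mult_right_mono) auto
      finally have "T6 \<le> E * (L * (u + Y) * t)" unfolding T6_def E_def by (rule tb)
      then show ?thesis by (simp add: algebra_simps)
    qed
    have T7b: "T7 \<le> E * L * dn"
    proof -
      have "\<bar>\<alpha> x y \<bullet> d\<bar> \<le> norm (\<alpha> x y) * dn" unfolding dn_def by (rule Cauchy_Schwarz_ineq2)
      also have "\<dots> \<le> L * dn" using balpha dn0 by (intro mult_right_mono) auto
      finally have "T7 \<le> E * (L * dn)" unfolding T7_def E_def by (rule tb)
      then show ?thesis by (simp add: algebra_simps)
    qed
    have coreI: "T1 + T2 + T3 + T4 + T5 + T6 + T7 \<le> (c/3) * V x z + a * (s\<^sup>2 + dn\<^sup>2) / (4 * L) + E\<^sup>2 * (Qf a c L E (V x z) u Y - c/4)"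
      by (rule core[OF L1 apos cpos E0 u0 Y0 V0' s0 dn0 uV YE t0 tL T1b T2b T3b T4b T5b T6b T7b])
    have QMp: "Qf a c L E (V x z) u Y \<le> M (x,(y,z))"
      using QM[of "(x,(y,z))"] by (simp add: Q_def L_def E_def e_def u_def Y_def)
    have Qpos: "c/4 \<le> Qf a c L E (V x z) u Y"
      by (rule Qf_pos[OF apos cpos less_imp_le[OF L0] E0 V0' u0 Y0])
    have etapos: "0 < \<eta> x y" using eta_pos by simp
    have gtr: "1 \<le> gt x y \<theta> * inverse (\<eta> x y)"
      using hc th etapos by (simp add: field_simps)
    have TKb: "TK \<le> - (E\<^sup>2 * Qf a c L E (V x z) u Y)"
    proof -
      have Mnn: "0 \<le> M (x,(y,z))" using QMp Qpos cpos by linarith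
      have "TK = - (e\<^sup>2 * M (x,(y,z))) * (gt x y \<theta> * inverse (\<eta> x y))"
        by (simp add: TK_def kb_def e_def power2_eq_square algebra_simps)
      also have "\<dots> \<le> - (e\<^sup>2 * M (x,(y,z))) * 1"
        using gtr Mnn by (intro mult_left_mono_neg) auto
      also have "\<dots> \<le> - (E\<^sup>2 * Qf a c L E (V x z) u Y)"
        using QMp Ee by (simp add: mult_left_mono)
      finally show ?thesis .
    qed
    have Wb: "a * (s\<^sup>2 + dn\<^sup>2) / (4 * L) \<le> W"
    proof -
      have "(s\<^sup>2 + dn\<^sup>2) / (4 * L) \<le> (s\<^sup>2 + dn\<^sup>2) / \<kappa>1"
        by (rule divide_left_mono) (use k1pos k1L L0 in auto)
      then have "(s\<^sup>2 + dn\<^sup>2) / (4 * L) \<le> (dn\<^sup>2 + s\<^sup>2) / \<kappa>1" by (simp add: add.commute)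
      then have "a * ((s\<^sup>2 + dn\<^sup>2) / (4 * L)) \<le> a * ((dn\<^sup>2 + s\<^sup>2) / \<kappa>1)"
        using apos by (intro mult_left_mono) auto
      then show ?thesis unfolding W_def by simp
    qed
    have LHS: "(Vx x z F - e * kx x z F) + (Vz x z - e * kz x z) * (\<Gamma>e * P)
        + e * (h x y + gt x y \<theta> * kb x y z + \<phi> x y \<bullet> \<theta> + \<alpha> x y \<bullet> d)
      = (Vx x z F0 + Vz x z * (\<Gamma>e * P0)) + T1 + T2 + T3 + T4 + T5 + T6 + T7 + TK"
      unfolding VxF T1_def T2_def T3_def T4_def T5_def T6_def T7_def TK_def by (simp add: algebra_simps)
    have ineq: "(Vx x z F - e * kx x z F) + (Vz x z - e * kz x z) * (\<Gamma>e * P)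
        + e * (h x y + gt x y \<theta> * kb x y z + \<phi> x y \<bullet> \<theta> + \<alpha> x y \<bullet> d)
      \<le> - (c / 2) * (V x z + (1/2) * e\<^sup>2) + 2 * W"
    proof -
      have d1: "E\<^sup>2 * (Qf a c L E (V x z) u Y - c/4) = E\<^sup>2 * Qf a c L E (V x z) u Y - (c/4) * E\<^sup>2"
        by (simp add: algebra_simps)
      have d2: "- (c / 2) * (V x z + (1/2) * e\<^sup>2) = - (c/2) * V x z - (c/4) * E\<^sup>2"
        using Ee by (simp add: algebra_simps)
      have d3: "(c/3) * V x z \<le> (c/2) * V x z" using cpos V0' by (intro mult_right_mono) auto
      have d4: "- c * V x z = - (c * V x z)" by simp
      have d5: "(c/2) * V x z + (c/2) * V x z = c * V x z" by simp
      show ?thesis unfolding LHS d2 using hb' coreI TKb Wb d1 d3 d4 d5 by linarith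
    qed
    have part2: "frechet_derivative (\<lambda>x'. V x' z + (1/2) * (y - k x' z)\<^sup>2) (at x) (f x + y *\<^sub>R g x \<theta> + \<Phi> x *v \<theta> + G x *v d)
      + deriv (\<lambda>z'. V x z' + (1/2) * (y - k x z')\<^sup>2) z * (\<Gamma> * exp (- z) * pos_part (V x z + (1/2) * (y - k x z)\<^sup>2 - \<epsilon>))
      + deriv (\<lambda>y'. V x z + (1/2) * (y' - k x z)\<^sup>2) y * (h x y + gt x y \<theta> * kb x y z + \<phi> x y \<bullet> \<theta> + \<alpha> x y \<bullet> d)
      \<le> - (c / 2) * (V x z + (1/2) * (y - k x z)\<^sup>2)
         + 2 * a * (((norm d)\<^sup>2 + (pos_part (norm \<theta> - b - lam (exp z)))\<^sup>2) / (1 + kap (exp z)))"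
      using ineq unfolding DX DY DZ
      by (simp add: F_def[symmetric] \<Gamma>e_def P_def e_def W_def dn_def s_def \<kappa>1_def mult.assoc)
    have part1: "(norm x)\<^sup>2 + \<bar>y\<bar>\<^sup>2 \<le> sb x y z * (V x z + (1/2) * (y - k x z)\<^sup>2)"
    proof -
      have M2b: "4 + 2 * L^3 + L \<le> sb x y z" using QM2[of "(x,(y,z))"] by (simp add: Q2_def sb_def L_def)
      have k2: "(k x z)\<^sup>2 \<le> L^3 * V x z"
      proof -
        have "\<bar>k x z\<bar>\<^sup>2 \<le> (L * u)\<^sup>2" by (rule power_mono[OF bk abs_ge_zero])
        then have "(k x z)\<^sup>2 \<le> L^2 * u\<^sup>2" by (simp add: power_mult_distrib)
        also have "\<dots> \<le> L^2 * (L * V x z)" using uV by (intro mult_left_mono) auto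
        also have "\<dots> = L^3 * V x z" by (simp add: power2_eq_square power3_eq_cube)
        finally show ?thesis .
      qed
      have y2: "y\<^sup>2 \<le> 2 * e\<^sup>2 + 2 * (k x z)\<^sup>2"
      proof -
        have ye: "y = e + k x z" by (simp add: e_def)
        have "0 \<le> (e - k x z)\<^sup>2" by simp
        then show ?thesis unfolding ye by (simp add: power2_eq_square algebra_simps)
      qed
      have lv: "L * V x z \<le> L * V x z" by simp
      have a1: "(norm x)\<^sup>2 + \<bar>y\<bar>\<^sup>2 \<le> 2 * e\<^sup>2 + (2 * (L^3 * V x z) + L * V x z)"
        using uV y2 k2 unfolding u_def by simp
      have a2: "2 * e\<^sup>2 \<le> sb x y z * ((1/2) * e\<^sup>2)"
      proof -
        have L3: "0 \<le> L^3" using L0 by simp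
        have s4: "4 \<le> sb x y z" using M2b L3 L1 by linarith
        have "4 * ((1/2) * e\<^sup>2) \<le> sb x y z * ((1/2) * e\<^sup>2)"
          using s4 by (intro mult_right_mono) auto
        then show ?thesis by simp
      qed
      have a3: "(2 * (L^3 * V x z) + L * V x z) \<le> sb x y z * V x z"
      proof -
        have "(2 * L^3 + L) * V x z \<le> sb x y z * V x z"
          using M2b V0' L1 by (intro mult_right_mono) auto
        then show ?thesis by (simp add: algebra_simps)
      qed
      have a4: "sb x y z * ((1/2) * e\<^sup>2) + sb x y z * V x z = sb x y z * (V x z + (1/2) * (y - k x z)\<^sup>2)"
        by (simp add: e_def algebra_simps)
      show ?thesis using a1 a2 a3 a4 by linarith
    qed
    show ?thesis using part1 part2 by blast
  qed
  show ?thesis unfolding Let_def using main smooth_sb smooth_kb kb0 by blast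
qed

end
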